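(* Let $G$ be a connected threshold graph that is not complete. Then $\chi(\mathcal{R}(G))=3$.
   Context: A threshold graph is a graph that can be constructed from a single vertex by repeatedly adding either an isolated vertex or a universal vertex (a vertex adjacent to all existing vertices). For a connected graph $G$, a search tree on $G$ is a rooted tree with vertex set $V(G)$ defined recursively: its root is some vertex $r\in V(G)$, and the children of $r$ are the roots of search trees on the connected components of $G-r$. For a rooted tree $T$ and $w\in V(T)$, $T|w$ denotes the subtree rooted at $w$. Let $T$ be a search tree on $G$, let $v$ be a child of $u$ in $T$, and let $p$ be the parent of $u$ (if it exists). The $uv$-rotation transforms $T$ into the search tree $T'$ in which: $u$ is a child of $v$ and $v$ is a child of $p$ (or $v$ is the root if $u$ was the root); every subtree of $u$ in $T$ other than $T|v$ is a subtree of $u$ in $T'$; and every subtree $S$ of $v$ in $T$ is a subtree of $u$ in $T'$ if $u$ is adjacent in $G$ to some vertex of $S$, and a subtree of $v$ in $T'$ otherwise. The rotation graph $\mathcal{R}(G)$ is the graph whose vertices are the search trees on $G$, two being adjacent iff they differ by one rotation. $\chi$ denotes chromatic number. *)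

theory Defs
  imports Main
begin

text \<open>Graphs: a vertex set V and an edge set E of two-element subsets.
  Adjacency of u and v is {u,v} \<in> E.\<close>

inductive threshold :: "'a set \<Rightarrow> 'a set set \<Rightarrow> bool" where
  single: "threshold {v} {}"
| add_isolated: "threshold V E \<Longrightarrow> v \<notin> V \<Longrightarrow> threshold (insert v V) E"
| add_universal: "threshold V E \<Longrightarrow> v \<notin> V \<Longrightarrow>
     threshold (insert v V) (E \<union> {{v, u} | u. u \<in> V})"

definition complete_graph :: "'a set \<Rightarrow> 'a set set \<Rightarrow> bool" where
  "complete_graph V E \<longleftrightarrow> (\<forall>u\<in>V. \<forall>v\<in>V. u \<noteq> v \<longrightarrow> {u, v} \<in> E)"

definition ind_rel :: "'a set set \<Rightarrow> 'a set \<Rightarrow> ('a \<times> 'a) set" where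
  "ind_rel E S = {(u, v). u \<in> S \<and> v \<in> S \<and> {u, v} \<in> E}"

definition connected_in :: "'a set set \<Rightarrow> 'a set \<Rightarrow> bool" where
  "connected_in E S \<longleftrightarrow> S \<noteq> {} \<and> (\<forall>u\<in>S. \<forall>v\<in>S. (u, v) \<in> (ind_rel E S)\<^sup>*)"

definition components :: "'a set set \<Rightarrow> 'a set \<Rightarrow> 'a set set" where
  "components E S = {{v \<in> S. (u, v) \<in> (ind_rel E S)\<^sup>*} | u. u \<in> S}"

text \<open>A rooted tree on a vertex set is represented by its root r and the set P
  of (child, parent) pairs.\<close>
inductive search_tree :: "'a set set \<Rightarrow> 'a set \<Rightarrow> 'a \<Rightarrow> ('a \<times> 'a) set \<Rightarrow> bool"
  for E :: "'a set set" where
  "r \<in> V \<Longrightarrow> connected_in E V \<Longrightarrow>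
   (\<forall>C \<in> components E (V - {r}). rt C \<in> C \<and> search_tree E C (rt C) (Pf C)) \<Longrightarrow>
   P = (\<Union>C \<in> components E (V - {r}). insert (rt C, r) (Pf C)) \<Longrightarrow>
   search_tree E V r P"

type_synonym 'a rtree = "'a \<times> ('a \<times> 'a) set"

definition search_trees :: "'a set set \<Rightarrow> 'a set \<Rightarrow> 'a rtree set" where
  "search_trees E V = {(r, P). search_tree E V r P}"

definition desc :: "('a \<times> 'a) set \<Rightarrow> 'a \<Rightarrow> 'a set" where
  "desc P w = {x. (x, w) \<in> P\<^sup>*}"

text \<open>The uv-rotation, where v is a child of u: u becomes a child of v, v takes u's place;
  each subtree T|c of v is moved to u iff u is adjacent to some vertex of T|c.\<close>
definition rotate :: "'a set set \<Rightarrow> 'a rtree \<Rightarrow> 'a \<Rightarrow> 'a \<Rightarrow> 'a rtree" where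
  "rotate E T u v = (let r = fst T; P = snd T in
     (if u = r then v else r,
      {(x, y) \<in> P. x \<noteq> u \<and> x \<noteq> v \<and> \<not> (y = v \<and> (\<exists>s\<in>desc P x. {u, s} \<in> E))}
      \<union> {(c, u) | c. (c, v) \<in> P \<and> (\<exists>s\<in>desc P c. {u, s} \<in> E)}
      \<union> {(u, v)}
      \<union> {(v, p) | p. (u, p) \<in> P}))"

definition rot_step :: "'a set set \<Rightarrow> 'a rtree \<Rightarrow> 'a rtree \<Rightarrow> bool" where
  "rot_step E T T' \<longleftrightarrow> (\<exists>u v. (v, u) \<in> snd T \<and> T' = rotate E T u v)"

definition rot_adj :: "'a set set \<Rightarrow> 'a rtree \<Rightarrow> 'a rtree \<Rightarrow> bool" where
  "rot_adj E T T' \<longleftrightarrow> rot_step E T T' \<or> rot_step E T' T"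

definition colorable :: "'b set \<Rightarrow> ('b \<Rightarrow> 'b \<Rightarrow> bool) \<Rightarrow> nat \<Rightarrow> bool" where
  "colorable W A k \<longleftrightarrow> (\<exists>f. f ` W \<subseteq> {..<k} \<and>
     (\<forall>x\<in>W. \<forall>y\<in>W. A x y \<longrightarrow> f x \<noteq> f y))"

definition chromatic_number :: "'b set \<Rightarrow> ('b \<Rightarrow> 'b \<Rightarrow> bool) \<Rightarrow> nat" where
  "chromatic_number W A = (LEAST k. colorable W A k)"

end

theory Submission
  imports Defs
begin

definition thr_struct :: "'a set \<Rightarrow> 'a set set \<Rightarrow> ('a \<Rightarrow> nat) \<Rightarrow> ('a \<Rightarrow> bool) \<Rightarrow> bool" where
  "thr_struct V E idx U \<longleftrightarrow> finite V \<and> inj_on idx V \<and>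
     (\<forall>e\<in>E. \<exists>x\<in>V. \<exists>y\<in>V. x \<noteq> y \<and> e = {x, y}) \<and>
     (\<forall>x\<in>V. \<forall>y\<in>V. {x, y} \<in> E \<longleftrightarrow> (x \<noteq> y \<and> ((idx x < idx y \<and> U y) \<or> (idx y < idx x \<and> U x))))"

lemma thr_structI:
  assumes "finite V" "inj_on idx V" "\<And>e. e \<in> E \<Longrightarrow> \<exists>x\<in>V. \<exists>y\<in>V. x \<noteq> y \<and> e = {x, y}"
    "\<And>x y. x \<in> V \<Longrightarrow> y \<in> V \<Longrightarrow> {x, y} \<in> E \<longleftrightarrow> (x \<noteq> y \<and> ((idx x < idx y \<and> U y) \<or> (idx y < idx x \<and> U x)))"
  shows "thr_struct V E idx U"
  using assms unfolding thr_struct_def by blast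

lemma thr_structD:
  assumes "thr_struct V E idx U"
  shows "finite V" "inj_on idx V" "\<And>e. e \<in> E \<Longrightarrow> \<exists>x\<in>V. \<exists>y\<in>V. x \<noteq> y \<and> e = {x, y}"
    "\<And>x y. x \<in> V \<Longrightarrow> y \<in> V \<Longrightarrow> {x, y} \<in> E \<longleftrightarrow> (x \<noteq> y \<and> ((idx x < idx y \<and> U y) \<or> (idx y < idx x \<and> U x)))"
  using assms unfolding thr_struct_def by blast+

lemma threshold_struct:
  assumes "threshold V E"
  shows "\<exists>idx U. thr_struct V E idx U"
  using assms
proof (induction rule: threshold.induct)
  case (single v)
  have "thr_struct {v} {} (\<lambda>_. 0) (\<lambda>_. False)"
    by (rule thr_structI) auto
  then show ?case by blast
next
  case (add_isolated V E v)
  then obtain idx U where S: "thr_struct V E idx U" by blast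
  note fin = thr_structD(1)[OF S] and inj = thr_structD(2)[OF S]
    and Ef = thr_structD(3)[OF S] and adj = thr_structD(4)[OF S]
  define m where "m = Suc (Max (idx ` V))"
  have lt: "\<And>x. x \<in> V \<Longrightarrow> idx x < m"
    using fin by (simp add: m_def le_imp_less_Suc)
  define idx' where "idx' = idx(v := m)"
  define U' where "U' = U(v := False)"
  have nE: "\<And>z. {v, z} \<notin> E"
  proof
    fix z assume "{v, z} \<in> E"
    then obtain x y where "x \<in> V" "y \<in> V" "{v, z} = {x, y}" using Ef by blast
    then show False using add_isolated.hyps by (auto simp: doubleton_eq_iff)
  qed
  have "thr_struct (insert v V) E idx' U'"
  proof (rule thr_structI)
    show "finite (insert v V)" using fin by simp
    show "inj_on idx' (insert v V)"
      unfolding inj_on_def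
    proof (intro ballI impI)
      fix x y assume x: "x \<in> insert v V" and y: "y \<in> insert v V" and e: "idx' x = idx' y"
      show "x = y"
      proof (cases "x = v")
        case True
        then show ?thesis using y e lt by (cases "y = v") (auto simp: idx'_def)
      next
        case False
        then show ?thesis using x y e lt inj add_isolated.hyps
          by (cases "y = v") (auto simp: idx'_def inj_on_def)
      qed
    qed
  next
    fix e assume "e \<in> E"
    then obtain x y where "x \<in> V" "y \<in> V" "x \<noteq> y" "e = {x, y}" using Ef by blast
    then show "\<exists>x\<in>insert v V. \<exists>y\<in>insert v V. x \<noteq> y \<and> e = {x, y}" by blast
  next
    fix x y assume x: "x \<in> insert v V" and y: "y \<in> insert v V"
    show "{x, y} \<in> E \<longleftrightarrow> (x \<noteq> y \<and> (idx' x < idx' y \<and> U' y \<or> idx' y < idx' x \<and> U' x))"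
    proof (cases "x = v")
      case True
      then show ?thesis using nE[of y] nE[of v] y lt[of y] add_isolated.hyps
        by (cases "y = v") (auto simp: idx'_def U'_def)
    next
      case xv: False
      show ?thesis
      proof (cases "y = v")
        case True
        then show ?thesis using nE[of x] x lt[of x] xv add_isolated.hyps
          by (auto simp: idx'_def U'_def insert_commute)
      next
        case False
        then show ?thesis using adj[of x y] x y xv
          by (auto simp: idx'_def U'_def)
      qed
    qed
  qed
  then show ?case by blast
next
  case (add_universal V E v)
  then obtain idx U where S: "thr_struct V E idx U" by blast
  note fin = thr_structD(1)[OF S] and inj = thr_structD(2)[OF S]
    and Ef = thr_structD(3)[OF S] and adj = thr_structD(4)[OF S]
  define m where "m = Suc (Max (idx ` V))"
  have lt: "\<And>x. x \<in> V \<Longrightarrow> idx x < m"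
    using fin by (simp add: m_def le_imp_less_Suc)
  define idx' where "idx' = idx(v := m)"
  define U' where "U' = U(v := True)"
  define E' where "E' = E \<union> {{v, u} |u. u \<in> V}"
  have nE: "\<And>z. {v, z} \<notin> E"
  proof
    fix z assume "{v, z} \<in> E"
    then obtain x y where "x \<in> V" "y \<in> V" "{v, z} = {x, y}" using Ef by blast
    then show False using add_universal.hyps by (auto simp: doubleton_eq_iff)
  qed
  have E'v: "\<And>z. {v, z} \<in> E' \<longleftrightarrow> z \<in> V"
  proof -
    fix z
    have "{v, z} \<in> {{v, u} |u. u \<in> V} \<longleftrightarrow> z \<in> V"
      using add_universal.hyps by (auto simp: doubleton_eq_iff)
    then show "{v, z} \<in> E' \<longleftrightarrow> z \<in> V" using nE[of z] by (simp add: E'_def)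
  qed
  have E'o: "\<And>x y. x \<noteq> v \<Longrightarrow> y \<noteq> v \<Longrightarrow> {x, y} \<in> E' \<longleftrightarrow> {x, y} \<in> E"
  proof -
    fix x y assume "x \<noteq> v" "y \<noteq> v"
    then have "{x, y} \<notin> {{v, u} |u. u \<in> V}" by (auto simp: doubleton_eq_iff)
    then show "{x, y} \<in> E' \<longleftrightarrow> {x, y} \<in> E" unfolding E'_def by blast
  qed
  have "thr_struct (insert v V) E' idx' U'"
  proof (rule thr_structI)
    show "finite (insert v V)" using fin by simp
    show "inj_on idx' (insert v V)"
      unfolding inj_on_def
    proof (intro ballI impI)
      fix x y assume x: "x \<in> insert v V" and y: "y \<in> insert v V" and e: "idx' x = idx' y"
      show "x = y"
      proof (cases "x = v")
        case True
        then show ?thesis using y e lt by (cases "y = v") (auto simp: idx'_def)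
      next
        case False
        then show ?thesis using x y e lt inj add_universal.hyps
          by (cases "y = v") (auto simp: idx'_def inj_on_def)
      qed
    qed
  next
    fix e assume "e \<in> E'"
    then show "\<exists>x\<in>insert v V. \<exists>y\<in>insert v V. x \<noteq> y \<and> e = {x, y}"
    proof (unfold E'_def, elim UnE)
      assume "e \<in> E"
      then obtain x y where "x \<in> V" "y \<in> V" "x \<noteq> y" "e = {x, y}" using Ef by blast
      then show ?thesis by blast
    next
      assume "e \<in> {{v, u} |u. u \<in> V}"
      then obtain u where "u \<in> V" "e = {v, u}" by blast
      then show ?thesis using add_universal.hyps by (metis insertI1 insertI2)
    qed
  next
    fix x y assume x: "x \<in> insert v V" and y: "y \<in> insert v V"
    show "{x, y} \<in> E' \<longleftrightarrow> (x \<noteq> y \<and> (idx' x < idx' y \<and> U' y \<or> idx' y < idx' x \<and> U' x))"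
    proof (cases "x = v")
      case True
      then show ?thesis using E'v[of y] E'v[of v] y lt[of y] add_universal.hyps
        by (cases "y = v") (auto simp: idx'_def U'_def)
    next
      case xv: False
      show ?thesis
      proof (cases "y = v")
        case True
        then show ?thesis using E'v[of x] x lt[of x] xv add_universal.hyps
          by (auto simp: idx'_def U'_def insert_commute)
      next
        case False
        then show ?thesis using adj[of x y] E'o[of x y] x y xv
          by (auto simp: idx'_def U'_def)
      qed
    qed
  qed
  then show ?case unfolding E'_def by blast
qed

section \<open>Components\<close>

lemma ind_rel_sym: "sym (ind_rel E S)"
  unfolding sym_def ind_rel_def by (auto simp: insert_commute)

lemma ind_rel_rtrancl_sym: "(x, y) \<in> (ind_rel E S)\<^sup>* \<Longrightarrow> (y, x) \<in> (ind_rel E S)\<^sup>*"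
  by (rule symD[OF sym_rtrancl[OF ind_rel_sym]])

lemma ind_rel_rtrancl_in: "(x, y) \<in> (ind_rel E S)\<^sup>* \<Longrightarrow> x \<in> S \<Longrightarrow> y \<in> S"
  by (induction rule: rtrancl_induct) (auto simp: ind_rel_def)

lemma ind_rel_mono: "S \<subseteq> S' \<Longrightarrow> ind_rel E S \<subseteq> ind_rel E S'"
  unfolding ind_rel_def by auto

lemma comp_sub: "K \<in> components E S \<Longrightarrow> K \<subseteq> S"
  unfolding components_def by auto

lemma comp_eq: 
  assumes "K \<in> components E S" "x \<in> K"
  shows "K = {y \<in> S. (x, y) \<in> (ind_rel E S)\<^sup>*}"
proof -
  obtain u where u: "u \<in> S" "K = {v \<in> S. (u, v) \<in> (ind_rel E S)\<^sup>*}"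
    using assms(1) unfolding components_def by blast
  then have ux: "(u, x) \<in> (ind_rel E S)\<^sup>*" using assms(2) by blast
  then have xu: "(x, u) \<in> (ind_rel E S)\<^sup>*" by (rule ind_rel_rtrancl_sym)
  have "\<And>v. (u, v) \<in> (ind_rel E S)\<^sup>* \<longleftrightarrow> (x, v) \<in> (ind_rel E S)\<^sup>*"
    using ux xu by (meson rtrancl_trans)
  then show ?thesis unfolding u(2) by blast
qed

lemma comp_self: "x \<in> S \<Longrightarrow> {y \<in> S. (x, y) \<in> (ind_rel E S)\<^sup>*} \<in> components E S"
  unfolding components_def by blast

lemma comp_memI: "x \<in> S \<Longrightarrow> x \<in> {y \<in> S. (x, y) \<in> (ind_rel E S)\<^sup>*}"
  by blast

lemma comp_disj:
  assumes "K1 \<in> components E S" "K2 \<in> components E S" "x \<in> K1" "x \<in> K2"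
  shows "K1 = K2"
  using comp_eq[OF assms(1,3)] comp_eq[OF assms(2,4)] by simp

lemma comp_cover:
  assumes "x \<in> S" shows "\<exists>K \<in> components E S. x \<in> K"
proof (rule bexI)
  show "x \<in> {y \<in> S. (x, y) \<in> (ind_rel E S)\<^sup>*}" using assms by simp
  show "{y \<in> S. (x, y) \<in> (ind_rel E S)\<^sup>*} \<in> components E S" using assms by (rule comp_self)
qed

lemma comp_union: "\<Union>(components E S) = S"
proof
  show "\<Union>(components E S) \<subseteq> S" by (rule Union_least) (rule comp_sub)
  show "S \<subseteq> \<Union>(components E S)"
  proof
    fix x assume "x \<in> S"
    then obtain K where "K \<in> components E S" "x \<in> K" using comp_cover by metis
    then show "x \<in> \<Union>(components E S)" by (rule UnionI)
  qed
qed

lemma comp_sep: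
  assumes "K \<in> components E S" "x \<in> K" "y \<in> S" "{x, y} \<in> E"
  shows "y \<in> K"
proof -
  have K: "K = {y \<in> S. (x, y) \<in> (ind_rel E S)\<^sup>*}" by (rule comp_eq[OF assms(1,2)])
  have "x \<in> S" using assms(1,2) comp_sub by blast
  then have "(x, y) \<in> ind_rel E S" using assms(3,4) by (simp add: ind_rel_def)
  then show ?thesis using K assms(3) by blast
qed

lemma comp_nonempty: "K \<in> components E S \<Longrightarrow> K \<noteq> {}"
  unfolding components_def by blast

lemma comp_connected:
  assumes "connected_in E S"
  shows "components E S = {S}"
proof -
  have S: "S \<noteq> {}" "\<And>u v. u \<in> S \<Longrightarrow> v \<in> S \<Longrightarrow> (u, v) \<in> (ind_rel E S)\<^sup>*"
    using assms unfolding connected_in_def by auto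
  have "\<And>u. u \<in> S \<Longrightarrow> {v \<in> S. (u, v) \<in> (ind_rel E S)\<^sup>*} = S" using S(2) by blast
  then show ?thesis using S(1) unfolding components_def by auto
qed

lemma comp_is_connected:
  assumes "K \<in> components E S"
  shows "connected_in E K"
proof -
  obtain u where u: "u \<in> S" "K = {v \<in> S. (u, v) \<in> (ind_rel E S)\<^sup>*}"
    using assms(1) unfolding components_def by blast
  have path: "\<And>v. (u, v) \<in> (ind_rel E S)\<^sup>* \<Longrightarrow> (u, v) \<in> (ind_rel E K)\<^sup>*"
  proof -
    fix v assume "(u, v) \<in> (ind_rel E S)\<^sup>*"
    then show "(u, v) \<in> (ind_rel E K)\<^sup>*"
    proof (induction rule: rtrancl_induct)
      case base then show ?case by simp
    next
      case (step y z)
      have yS: "y \<in> S" by (rule ind_rel_rtrancl_in[OF step.hyps(1) u(1)])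
      have "y \<in> K" unfolding u(2) using yS step.hyps(1) by simp
      moreover have uz: "(u, z) \<in> (ind_rel E S)\<^sup>*" using step.hyps by simp
      have zS: "z \<in> S" by (rule ind_rel_rtrancl_in[OF uz u(1)])
      have "z \<in> K" unfolding u(2) using zS uz by simp
      ultimately have "(y, z) \<in> ind_rel E K" using step.hyps(2) by (simp add: ind_rel_def)
      then show ?case using step.IH by simp
    qed
  qed
  show ?thesis unfolding connected_in_def
  proof (intro conjI ballI)
    show "K \<noteq> {}" using u by blast
    fix x y assume "x \<in> K" "y \<in> K"
    then have "(u, x) \<in> (ind_rel E K)\<^sup>*" "(u, y) \<in> (ind_rel E K)\<^sup>*" using u path by auto
    then show "(x, y) \<in> (ind_rel E K)\<^sup>*" using ind_rel_rtrancl_sym[of u x E K] rtrancl_trans by fast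
  qed
qed

section \<open>Search tree invariants\<close>

definition stinv :: "'a set set \<Rightarrow> 'a set \<Rightarrow> 'a \<Rightarrow> ('a \<times> 'a) set \<Rightarrow> bool" where
  "stinv E V r P \<longleftrightarrow>
    r \<in> V \<and>
    (\<forall>x y. (x, y) \<in> P \<longrightarrow> x \<in> V \<and> y \<in> V \<and> x \<noteq> r) \<and>
    (\<forall>x y y'. (x, y) \<in> P \<longrightarrow> (x, y') \<in> P \<longrightarrow> y = y') \<and>
    (\<forall>x\<in>V. (x, r) \<in> P\<^sup>*) \<and>
    (\<exists>h::'a \<Rightarrow> nat. \<forall>x y. (x, y) \<in> P \<longrightarrow> h y < h x) \<and>
    (\<forall>z\<in>V. connected_in E (desc P z)) \<and>
    (\<forall>z c. (c, z) \<in> P \<longrightarrow> desc P c \<in> components E (desc P z - {z})) \<and>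
    desc P r = V"

lemma stinvD:
  assumes "stinv E V r P"
  shows "r \<in> V"
    "\<And>x y. (x, y) \<in> P \<Longrightarrow> x \<in> V"
    "\<And>x y. (x, y) \<in> P \<Longrightarrow> y \<in> V"
    "\<And>x y. (x, y) \<in> P \<Longrightarrow> x \<noteq> r"
    "\<And>x y y'. (x, y) \<in> P \<Longrightarrow> (x, y') \<in> P \<Longrightarrow> y = y'"
    "\<And>x. x \<in> V \<Longrightarrow> (x, r) \<in> P\<^sup>*"
    "\<exists>h::'a \<Rightarrow> nat. \<forall>x y. (x, y) \<in> P \<longrightarrow> h y < h x"
    "\<And>z. z \<in> V \<Longrightarrow> connected_in E (desc P z)"
    "\<And>z c. (c, z) \<in> P \<Longrightarrow> desc P c \<in> components E (desc P z - {z})"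
    "desc P r = V"
  using assms unfolding stinv_def by blast+

lemma desc_refl: "z \<in> desc P z"
  unfolding desc_def by simp

lemma desc_mono: "P \<subseteq> Q \<Longrightarrow> desc P z \<subseteq> desc Q z"
  unfolding desc_def using rtrancl_mono by blast

lemma search_tree_stinv:
  assumes "search_tree E V r P"
  shows "stinv E V r P"
  using assms
proof (induction rule: search_tree.induct)
  case (1 r V rt Pf P)
  define CS where "CS = components E (V - {r})"
  have H: "\<And>C. C \<in> CS \<Longrightarrow> rt C \<in> C \<and> stinv E C (rt C) (Pf C)"
    using 1(4) unfolding CS_def by blast
  have CsubV: "\<And>C. C \<in> CS \<Longrightarrow> C \<subseteq> V - {r}"
    unfolding CS_def by (rule comp_sub)
  have Cdisj: "\<And>C C' x. C \<in> CS \<Longrightarrow> C' \<in> CS \<Longrightarrow> x \<in> C \<Longrightarrow> x \<in> C' \<Longrightarrow> C = C'"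
    unfolding CS_def by (rule comp_disj)
  have Pm: "\<And>x y. (x, y) \<in> P \<longleftrightarrow> (\<exists>C\<in>CS. (x = rt C \<and> y = r) \<or> (x, y) \<in> Pf C)"
    using 1(3) unfolding CS_def by blast
  have PfP: "\<And>C. C \<in> CS \<Longrightarrow> Pf C \<subseteq> P"
  proof
    fix C p assume "C \<in> CS" "p \<in> Pf C"
    then show "p \<in> P" using 1(3) unfolding CS_def by blast
  qed
  have Pfin: "\<And>C x y. C \<in> CS \<Longrightarrow> (x, y) \<in> Pf C \<Longrightarrow> x \<in> C \<and> y \<in> C \<and> x \<noteq> rt C"
  proof -
    fix C x y assume C: "C \<in> CS" and xy: "(x, y) \<in> Pf C"
    have S: "stinv E C (rt C) (Pf C)" using H[OF C] by blast
    show "x \<in> C \<and> y \<in> C \<and> x \<noteq> rt C"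
      using stinvD(2)[OF S xy] stinvD(3)[OF S xy] stinvD(4)[OF S xy] by blast
  qed
  have rC: "\<And>C. C \<in> CS \<Longrightarrow> r \<notin> C" using CsubV by blast
  have rtV: "\<And>C. C \<in> CS \<Longrightarrow> rt C \<in> V \<and> rt C \<noteq> r"
  proof -
    fix C assume C: "C \<in> CS"
    then have "rt C \<in> C" using H by blast
    then show "rt C \<in> V \<and> rt C \<noteq> r" using CsubV[OF C] by blast
  qed
  have Dsub: "\<And>C z y. C \<in> CS \<Longrightarrow> z \<in> C \<Longrightarrow> (y, z) \<in> P\<^sup>* \<Longrightarrow> (y, z) \<in> (Pf C)\<^sup>*"
  proof -
    fix C z y assume C: "C \<in> CS" and z: "z \<in> C" and yz: "(y, z) \<in> P\<^sup>*"
    from yz show "(y, z) \<in> (Pf C)\<^sup>*"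
    proof (induction rule: converse_rtrancl_induct)
      case base then show ?case by simp
    next
      case (step y y1)
      have y1C: "y1 \<in> C"
        using step.IH
      proof (cases rule: converse_rtranclE)
        case base then show ?thesis using z by simp
      next
        case (step w)
        then show ?thesis using Pfin[OF C] by blast
      qed
      obtain C' where C': "C' \<in> CS" "(y = rt C' \<and> y1 = r) \<or> (y, y1) \<in> Pf C'"
        using Pm step.hyps(1) by blast
      have "(y, y1) \<in> Pf C"
      proof (cases "(y, y1) \<in> Pf C'")
        case True
        then have "y1 \<in> C'" using Pfin[OF C'(1)] by blast
        then have "C' = C" using Cdisj[OF C'(1) C] y1C by blast
        then show ?thesis using True by simp
      next
        case False
        then have "y1 = r" using C'(2) by blast
        then show ?thesis using y1C rC[OF C] by simp
      qed
      then show ?case using step.IH by (rule converse_rtrancl_into_rtrancl)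
    qed
  qed
  have Deq: "\<And>C z. C \<in> CS \<Longrightarrow> z \<in> C \<Longrightarrow> desc P z = desc (Pf C) z"
  proof -
    fix C z assume C: "C \<in> CS" and z: "z \<in> C"
    show "desc P z = desc (Pf C) z"
    proof
      show "desc P z \<subseteq> desc (Pf C) z" unfolding desc_def using Dsub[OF C z] by blast
      show "desc (Pf C) z \<subseteq> desc P z" by (rule desc_mono[OF PfP[OF C]])
    qed
  qed
  have inV: "\<And>x y. (x, y) \<in> P \<Longrightarrow> x \<in> V \<and> y \<in> V \<and> x \<noteq> r"
  proof -
    fix x y assume "(x, y) \<in> P"
    then obtain C where C: "C \<in> CS" "(x = rt C \<and> y = r) \<or> (x, y) \<in> Pf C" using Pm by blast
    show "x \<in> V \<and> y \<in> V \<and> x \<noteq> r"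
    proof (cases "(x, y) \<in> Pf C")
      case True
      then show ?thesis using Pfin[OF C(1) True] CsubV[OF C(1)] by blast
    next
      case False
      then show ?thesis using C(2) rtV[OF C(1)] 1(1) by blast
    qed
  qed
  have func: "\<And>x y y'. (x, y) \<in> P \<Longrightarrow> (x, y') \<in> P \<Longrightarrow> y = y'"
  proof -
    fix x y y' assume a: "(x, y) \<in> P" "(x, y') \<in> P"
    obtain C where C: "C \<in> CS" "(x = rt C \<and> y = r) \<or> (x, y) \<in> Pf C" using Pm a(1) by blast
    obtain C' where C': "C' \<in> CS" "(x = rt C' \<and> y' = r) \<or> (x, y') \<in> Pf C'" using Pm a(2) by blast
    have xC: "x \<in> C" using C H Pfin by blast
    have xC': "x \<in> C'" using C' H Pfin by blast
    have CC: "C' = C" using Cdisj[OF C'(1) C(1) xC' xC] .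
    show "y = y'"
    proof (cases "(x, y) \<in> Pf C")
      case True
      then have "x \<noteq> rt C" using Pfin[OF C(1)] by blast
      then have "(x, y') \<in> Pf C" using C'(2) CC by blast
      then show ?thesis using stinvD(5)[of E C "rt C" "Pf C" x y y'] H[OF C(1)] True by blast
    next
      case False
      then have y: "x = rt C" "y = r" using C(2) by blast+
      have "(x, y') \<notin> Pf C" using y Pfin[OF C(1)] by blast
      then have "y' = r" using C'(2) CC by blast
      then show ?thesis using y by simp
    qed
  qed
  have reach: "\<And>x. x \<in> V \<Longrightarrow> (x, r) \<in> P\<^sup>*"
  proof -
    fix x assume x: "x \<in> V"
    show "(x, r) \<in> P\<^sup>*"
    proof (cases "x = r")
      case True then show ?thesis by simp
    next
      case False
      then have "x \<in> V - {r}" using x by blast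
      then obtain C where C: "C \<in> CS" "x \<in> C" using comp_cover unfolding CS_def by metis
      have S: "stinv E C (rt C) (Pf C)" using H[OF C(1)] by blast
      have "(x, rt C) \<in> (Pf C)\<^sup>*" using stinvD(6)[OF S C(2)] .
      then have "(x, rt C) \<in> P\<^sup>*" using rtrancl_mono[OF PfP[OF C(1)]] by blast
      moreover have "(rt C, r) \<in> P" using Pm C(1) by blast
      ultimately show ?thesis by (rule rtrancl_into_rtrancl)
    qed
  qed
  have descr: "desc P r = V"
  proof
    show "V \<subseteq> desc P r"
    proof
      fix x assume "x \<in> V" then show "x \<in> desc P r" unfolding desc_def using reach[of x] by simp
    qed
    show "desc P r \<subseteq> V"
    proof
      fix y assume "y \<in> desc P r"
      then have "(y, r) \<in> P\<^sup>*" unfolding desc_def by simp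
      then show "y \<in> V"
      proof (cases rule: converse_rtranclE)
        case base then show ?thesis using 1(1) by simp
      next
        case (step w) then show ?thesis using inV[of y w] by simp
      qed
    qed
  qed
  have hex: "\<exists>h::'a \<Rightarrow> nat. \<forall>x y. (x, y) \<in> P \<longrightarrow> h y < h x"
  proof -
    define hh where "hh C = (SOME h::'a \<Rightarrow> nat. \<forall>x y. (x, y) \<in> Pf C \<longrightarrow> h y < h x)" for C
    have hh: "\<And>C x y. C \<in> CS \<Longrightarrow> (x, y) \<in> Pf C \<Longrightarrow> hh C y < hh C x"
    proof -
      fix C x y assume C: "C \<in> CS" and xy: "(x, y) \<in> Pf C"
      have "\<exists>h::'a \<Rightarrow> nat. \<forall>x y. (x, y) \<in> Pf C \<longrightarrow> h y < h x"
        using stinvD(7)[of E C "rt C" "Pf C"] H[OF C] by simp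
      then have "\<forall>x y. (x, y) \<in> Pf C \<longrightarrow> hh C y < hh C x"
        unfolding hh_def by (rule someI_ex)
      then show "hh C y < hh C x" using xy by blast
    qed
    define cmp where "cmp x = (SOME C. C \<in> CS \<and> x \<in> C)" for x
    have cmp: "\<And>C x. C \<in> CS \<Longrightarrow> x \<in> C \<Longrightarrow> cmp x = C"
    proof -
      fix C x assume C: "C \<in> CS" "x \<in> C"
      then have "C \<in> CS \<and> x \<in> C" by simp
      then have "cmp x \<in> CS \<and> x \<in> cmp x" unfolding cmp_def by (rule someI)
      then show "cmp x = C" using Cdisj[of "cmp x" C x] C by simp
    qed
    define h where "h x = (if x = r then 0 else Suc (hh (cmp x) x))" for x
    have "\<forall>x y. (x, y) \<in> P \<longrightarrow> h y < h x"
    proof (intro allI impI)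
      fix x y assume "(x, y) \<in> P"
      then obtain C where C: "C \<in> CS" "(x = rt C \<and> y = r) \<or> (x, y) \<in> Pf C" using Pm by blast
      show "h y < h x"
      proof (cases "(x, y) \<in> Pf C")
        case True
        then have xy: "x \<in> C" "y \<in> C" using Pfin[OF C(1)] by blast+
        then have "x \<noteq> r" "y \<noteq> r" using rC[OF C(1)] by blast+
        then show ?thesis using hh[OF C(1) True] cmp[OF C(1) xy(1)] cmp[OF C(1) xy(2)]
          by (simp add: h_def)
      next
        case False
        then have "x = rt C" "y = r" using C(2) by blast+
        then show ?thesis using rtV[OF C(1)] by (simp add: h_def)
      qed
    qed
    then show ?thesis by blast
  qed
  have conn: "\<And>z. z \<in> V \<Longrightarrow> connected_in E (desc P z)"
  proof -
    fix z assume z: "z \<in> V"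
    show "connected_in E (desc P z)"
    proof (cases "z = r")
      case True then show ?thesis using descr 1(2) by simp
    next
      case False
      then have "z \<in> V - {r}" using z by blast
      then obtain C where C: "C \<in> CS" "z \<in> C" using comp_cover unfolding CS_def by metis
      have S: "stinv E C (rt C) (Pf C)" using H[OF C(1)] by blast
      show ?thesis using Deq[OF C] stinvD(8)[OF S C(2)] by simp
    qed
  qed
  have child: "\<And>z c. (c, z) \<in> P \<Longrightarrow> desc P c \<in> components E (desc P z - {z})"
  proof -
    fix z c assume "(c, z) \<in> P"
    then obtain C where C: "C \<in> CS" "(c = rt C \<and> z = r) \<or> (c, z) \<in> Pf C" using Pm by blast
    have S: "stinv E C (rt C) (Pf C)" using H[OF C(1)] by blast
    show "desc P c \<in> components E (desc P z - {z})"
    proof (cases "(c, z) \<in> Pf C")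
      case True
      then have cz: "c \<in> C" "z \<in> C" using Pfin[OF C(1)] by blast+
      show ?thesis using Deq[OF C(1) cz(1)] Deq[OF C(1) cz(2)] stinvD(9)[OF S True] by simp
    next
      case False
      then have cz: "c = rt C" "z = r" using C(2) by blast+
      have "rt C \<in> C" using H[OF C(1)] by blast
      then have "desc P c = C" using Deq[OF C(1)] stinvD(10)[OF S] cz by simp
      then show ?thesis using C(1) descr cz unfolding CS_def by simp
    qed
  qed
  show ?case unfolding stinv_def
    using 1(1) inV func reach hex conn child descr by blast
qed

definition anc :: "('a \<times> 'a) set \<Rightarrow> 'a \<Rightarrow> 'a set" where
  "anc P z = {a. (z, a) \<in> P\<^sup>+}"

locale stree =
  fixes E :: "'a set set" and V :: "'a set" and r :: 'a and P :: "('a \<times> 'a) set"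
  assumes inv: "stinv E V r P"
begin

lemma rV: "r \<in> V" using stinvD(1)[OF inv] .
lemma PV1: "(x, y) \<in> P \<Longrightarrow> x \<in> V" using stinvD(2)[OF inv] .
lemma PV2: "(x, y) \<in> P \<Longrightarrow> y \<in> V" using stinvD(3)[OF inv] .
lemma Pnr: "(x, y) \<in> P \<Longrightarrow> x \<noteq> r" using stinvD(4)[OF inv] .
lemma func: "(x, y) \<in> P \<Longrightarrow> (x, y') \<in> P \<Longrightarrow> y = y'" using stinvD(5)[OF inv] .
lemma reach: "x \<in> V \<Longrightarrow> (x, r) \<in> P\<^sup>*" using stinvD(6)[OF inv] .
lemma conn: "z \<in> V \<Longrightarrow> connected_in E (desc P z)" using stinvD(8)[OF inv] .
lemma childcomp: "(c, z) \<in> P \<Longrightarrow> desc P c \<in> components E (desc P z - {z})" using stinvD(9)[OF inv] .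
lemma descr: "desc P r = V" using stinvD(10)[OF inv] .

definition hgt where "hgt = (SOME h::'a \<Rightarrow> nat. \<forall>x y. (x, y) \<in> P \<longrightarrow> h y < h x)"

lemma hgt: "(x, y) \<in> P \<Longrightarrow> hgt y < hgt x"
proof -
  have "\<exists>h::'a \<Rightarrow> nat. \<forall>x y. (x, y) \<in> P \<longrightarrow> h y < h x" using stinvD(7)[OF inv] .
  then have "\<forall>x y. (x, y) \<in> P \<longrightarrow> hgt y < hgt x" unfolding hgt_def by (rule someI_ex)
  then show "(x, y) \<in> P \<Longrightarrow> hgt y < hgt x" by blast
qed

lemma hgt_trancl: "(x, y) \<in> P\<^sup>+ \<Longrightarrow> hgt y < hgt x"
proof (induction rule: trancl_induct)
  case (base y) then show ?case by (rule hgt)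
next
  case (step y z) then show ?case using hgt[OF step.hyps(2)] by simp
qed

lemma acyc: "(x, x) \<notin> P\<^sup>+"
  using hgt_trancl by blast

lemma anc_step: "(z, y) \<in> P \<Longrightarrow> anc P z = insert y (anc P y)"
proof
  assume zy: "(z, y) \<in> P"
  show "anc P z \<subseteq> insert y (anc P y)"
  proof
    fix a assume "a \<in> anc P z"
    then have "(z, a) \<in> P\<^sup>+" unfolding anc_def by simp
    then obtain w where w: "(z, w) \<in> P" "w = a \<or> (w, a) \<in> P\<^sup>+"
      by (metis converse_tranclE)
    have "w = y" using func[OF w(1) zy] .
    then show "a \<in> insert y (anc P y)" using w(2) unfolding anc_def by blast
  qed
  show "insert y (anc P y) \<subseteq> anc P z"
    unfolding anc_def using zy by (auto intro: trancl_into_trancl2)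
qed

lemma anc_trans: "a \<in> anc P z \<Longrightarrow> b \<in> anc P a \<Longrightarrow> b \<in> anc P z"
  unfolding anc_def by simp

lemma anc_none: "(\<And>y. (z, y) \<notin> P) \<Longrightarrow> anc P z = {}"
  unfolding anc_def by (metis (no_types, lifting) Collect_empty_eq converse_tranclE)

lemma desc_anc: "desc P z = insert z {y. z \<in> anc P y}"
  unfolding desc_def anc_def by (auto simp: rtrancl_eq_or_trancl)

lemma anc_V: "anc P z \<subseteq> V"
proof
  fix a assume "a \<in> anc P z"
  then have "(z, a) \<in> P\<^sup>+" unfolding anc_def by simp
  then obtain w where "(w, a) \<in> P" by (metis tranclE)
  then show "a \<in> V" by (rule PV2)
qed

lemma anc_notV: "z \<notin> V \<Longrightarrow> anc P z = {}"
  using PV1 anc_none by blast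

lemma desc_V: "z \<in> V \<Longrightarrow> desc P z \<subseteq> V"
proof
  fix y assume z: "z \<in> V" and "y \<in> desc P z"
  then have "(y, z) \<in> P\<^sup>*" unfolding desc_def by simp
  then show "y \<in> V"
  proof (cases rule: converse_rtranclE)
    case base then show ?thesis using z by simp
  next
    case (step w) then show ?thesis using PV1 by blast
  qed
qed

lemma desc_trans: "y \<in> desc P z \<Longrightarrow> x \<in> desc P y \<Longrightarrow> x \<in> desc P z"
  unfolding desc_def by simp

lemma anc_not_desc: "a \<in> anc P z \<Longrightarrow> a \<notin> desc P z"
proof
  assume "a \<in> anc P z" "a \<in> desc P z"
  then have "(z, a) \<in> P\<^sup>+" "(a, z) \<in> P\<^sup>*" unfolding anc_def desc_def by simp_all
  then have "(z, z) \<in> P\<^sup>+" by simp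
  then show False using acyc by blast
qed

lemma anc_desc: "a \<in> anc P z \<longleftrightarrow> z \<in> desc P a \<and> z \<noteq> a"
proof
  assume a: "a \<in> anc P z"
  then have "(z, a) \<in> P\<^sup>+" unfolding anc_def by simp
  then show "z \<in> desc P a \<and> z \<noteq> a" unfolding desc_def using acyc by (auto dest: trancl_into_rtrancl)
next
  assume "z \<in> desc P a \<and> z \<noteq> a"
  then show "a \<in> anc P z" unfolding desc_def anc_def by (auto simp: rtrancl_eq_or_trancl)
qed

lemma child_desc: "(c, z) \<in> P \<Longrightarrow> desc P c \<subseteq> desc P z - {z}"
  using childcomp comp_sub by blast

lemma child_in_desc: "(c, z) \<in> P \<Longrightarrow> c \<in> desc P z"
  unfolding desc_def by auto

lemma sep:
  assumes "(c, z) \<in> P" "x \<in> desc P c" "y \<in> desc P z" "y \<noteq> z" "y \<notin> desc P c"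
  shows "{x, y} \<notin> E"
proof
  assume e: "{x, y} \<in> E"
  have "y \<in> desc P z - {z}" using assms by blast
  then have "y \<in> desc P c" using comp_sep[OF childcomp[OF assms(1)] assms(2) _ e] by blast
  then show False using assms(5) by blast
qed

lemma desc_child:
  assumes "y \<in> desc P z" "y \<noteq> z"
  shows "\<exists>c. (c, z) \<in> P \<and> y \<in> desc P c"
proof -
  have "(y, z) \<in> P\<^sup>+" using assms unfolding desc_def by (auto simp: rtrancl_eq_or_trancl)
  then obtain c where "(y, c) \<in> P\<^sup>*" "(c, z) \<in> P" by (metis tranclD2)
  then show ?thesis unfolding desc_def by blast
qed

lemma desc_parent_ex:
  assumes "y \<in> desc P z" "y \<noteq> z"
  shows "\<exists>w. (y, w) \<in> P"
proof -
  have "(y, z) \<in> P\<^sup>+" using assms unfolding desc_def by (auto simp: rtrancl_eq_or_trancl)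
  then show ?thesis by (metis converse_tranclE)
qed

lemma children_disj:
  assumes "(c, z) \<in> P" "(c', z) \<in> P" "c \<noteq> c'" "x \<in> desc P c"
  shows "x \<notin> desc P c'"
proof
  assume x': "x \<in> desc P c'"
  have "desc P c = desc P c'"
    using comp_disj[OF childcomp[OF assms(1)] childcomp[OF assms(2)] assms(4) x'] .
  then have "c \<in> desc P c'" "c' \<in> desc P c" using desc_refl by metis+
  then have "(c, c') \<in> P\<^sup>*" "(c', c) \<in> P\<^sup>*" unfolding desc_def by simp_all
  then have "(c, c) \<in> P\<^sup>+" using assms(3) by (metis rtrancl_eq_or_trancl rtrancl_trancl_trancl)
  then show False using acyc by blast
qed

lemma desc_parent:
  assumes "x \<in> desc P c" "x \<noteq> c" "(x, y) \<in> P"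
  shows "y \<in> desc P c"
proof -
  have "(x, c) \<in> P\<^sup>+" using assms(1,2) unfolding desc_def by (auto simp: rtrancl_eq_or_trancl)
  then obtain w where "(x, w) \<in> P" "(w, c) \<in> P\<^sup>*" by (metis converse_tranclE trancl_into_rtrancl rtrancl.rtrancl_refl)
  then show ?thesis using func[OF assms(3)] unfolding desc_def by simp
qed

lemma parent_desc: "(x, y) \<in> P \<Longrightarrow> y \<in> desc P c \<Longrightarrow> x \<in> desc P c"
  unfolding desc_def by (auto intro: converse_rtrancl_into_rtrancl)

end

locale rotctx = T: stree E V r P + T': stree E V r' P'
  for E :: "'a set set" and V r P r' P' +
  fixes u v :: 'a
  assumes vu: "(v, u) \<in> P" and rot: "rotate E (r, P) u v = (r', P')"
begin

definition Mc where "Mc = {c. (c, v) \<in> P \<and> (\<exists>s\<in>desc P c. {u, s} \<in> E)}"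
definition S where "S = {z. \<exists>c. (c, v) \<in> P \<and> c \<notin> Mc \<and> z \<in> desc P c}"
definition F where "F z = (if z = u then insert v (anc P u) else if z = v then anc P u
   else if z \<in> S then anc P z - {u} else if z \<in> desc P v then anc P z
   else if z \<in> desc P u then insert v (anc P z) else anc P z)"

lemma Pr: "(x, y) \<in> P' \<longleftrightarrow> ((x, y) \<in> P \<and> x \<noteq> u \<and> x \<noteq> v \<and> \<not> (y = v \<and> x \<in> Mc))
   \<or> (y = u \<and> x \<in> Mc) \<or> (x = u \<and> y = v) \<or> (x = v \<and> (u, y) \<in> P)"
proof -
  have "P' = snd (rotate E (r, P) u v)" using rot by simp
  then show ?thesis unfolding rotate_def Let_def Mc_def by auto
qed

lemma uV: "u \<in> V" using T.PV2[OF vu] .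
lemma vV: "v \<in> V" using T.PV1[OF vu] .
lemma uv: "u \<noteq> v" using vu T.acyc by blast
lemma Tv_sub: "desc P v \<subseteq> desc P u - {u}" using T.child_desc[OF vu] .
lemma u_notin_Tv: "u \<notin> desc P v" using Tv_sub by blast
lemma v_in_Tu: "v \<in> desc P u" using T.child_in_desc[OF vu] .
lemma anc_v: "anc P v = insert u (anc P u)" using T.anc_step[OF vu] .
lemma u_notin_ancu: "u \<notin> anc P u" using T.anc_not_desc desc_refl by metis
lemma v_notin_ancu: "v \<notin> anc P u"
  using T.anc_desc u_notin_Tv by blast
lemma S_sub: "S \<subseteq> desc P v - {v}"
  unfolding S_def using T.child_desc by blast

lemma P'u: "(u, v) \<in> P'" using Pr by blast
lemma P'v: "(v, y) \<in> P' \<longleftrightarrow> (u, y) \<in> P"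
proof -
  have "v \<notin> Mc" unfolding Mc_def using T.acyc by blast
  then show ?thesis using Pr uv by blast
qed
lemma P'Mc: "c \<in> Mc \<Longrightarrow> (c, u) \<in> P'" using Pr by blast
lemma P'keep: "(z, y) \<in> P \<Longrightarrow> z \<noteq> u \<Longrightarrow> z \<noteq> v \<Longrightarrow> \<not> (y = v \<and> z \<in> Mc) \<Longrightarrow> (z, y) \<in> P'"
  using Pr by blast
lemma P'none: "(\<And>y. (z, y) \<notin> P) \<Longrightarrow> z \<noteq> u \<Longrightarrow> z \<noteq> v \<Longrightarrow> (z, y) \<notin> P'"
  unfolding Pr Mc_def by blast

lemma F_out: "z \<notin> desc P u \<Longrightarrow> F z = anc P z"
  using S_sub Tv_sub desc_refl unfolding F_def by (metis DiffD1 subsetD)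

lemma anc'_v:
  assumes "\<And>p. (u, p) \<in> P \<Longrightarrow> anc P' p = anc P p"
  shows "anc P' v = anc P u"
proof (cases "\<exists>p. (u, p) \<in> P")
  case True
  then obtain p where p: "(u, p) \<in> P" by blast
  have "(v, p) \<in> P'" using P'v p by simp
  then have "anc P' v = insert p (anc P' p)" by (rule T'.anc_step)
  also have "\<dots> = insert p (anc P p)" using assms[OF p] by simp
  also have "\<dots> = anc P u" using T.anc_step[OF p] by simp
  finally show ?thesis .
next
  case False
  then have "\<And>y. (v, y) \<notin> P'" using P'v by simp
  then have "anc P' v = {}" by (rule T'.anc_none)
  moreover have "anc P u = {}" using False T.anc_none by blast
  ultimately show ?thesis by simp
qed

lemma anc'_main: "anc P' z = F z"
proof (induction "T.hgt z" arbitrary: z rule: less_induct)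
  case less
  have IHa: "\<And>a. a \<in> anc P z \<Longrightarrow> anc P' a = F a"
    using less T.hgt_trancl unfolding anc_def by blast
  have pu: "\<And>p. (u, p) \<in> P \<Longrightarrow> u \<in> anc P z \<or> u = z \<Longrightarrow> anc P' p = anc P p"
  proof -
    fix p assume p: "(u, p) \<in> P" and uz: "u \<in> anc P z \<or> u = z"
    have pu: "p \<in> anc P u" using T.anc_step[OF p] by simp
    have "p \<in> anc P z"
    proof (cases "u = z")
      case True then show ?thesis using pu by simp
    next
      case False then show ?thesis using uz T.anc_trans[OF _ pu] by simp
    qed
    then have "anc P' p = F p" by (rule IHa)
    moreover have "p \<notin> desc P u" using T.anc_not_desc T.anc_step[OF p] by blast
    ultimately show "anc P' p = anc P p" using F_out by simp
  qed
  show ?case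
  proof (cases "z = u")
    case True
    have "anc P' u = insert v (anc P' v)" using T'.anc_step[OF P'u] .
    also have "anc P' v = anc P u" using anc'_v pu True by blast
    finally show ?thesis using True by (simp add: F_def)
  next
    case zu: False
    show ?thesis
    proof (cases "z = v")
      case True
      have "anc P' v = anc P u" using anc'_v pu True anc_v by blast
      then show ?thesis using True uv by (simp add: F_def)
    next
      case zv: False
      show ?thesis
      proof (cases "z \<in> desc P u")
        case zTu: True
        show ?thesis
        proof (cases "z \<in> desc P v")
          case zTv: True
          obtain y where zy: "(z, y) \<in> P" using T.desc_parent_ex[OF zTv zv] by blast
          have yTv: "y \<in> desc P v" using T.desc_parent[OF zTv zv zy] .
          have u_anc: "u \<in> anc P z" using T.anc_desc zTv Tv_sub T.desc_trans[OF v_in_Tu] zu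
            by (metis DiffD1 desc_refl subset_iff)
          show ?thesis
          proof (cases "y = v")
            case yv: True
            show ?thesis
            proof (cases "z \<in> Mc")
              case zM: True
              have "anc P' z = insert u (anc P' u)" using T'.anc_step[OF P'Mc[OF zM]] .
              also have "anc P' u = F u" using IHa[OF u_anc] .
              finally have A: "anc P' z = insert u (insert v (anc P u))" by (simp add: F_def)
              have zS: "z \<notin> S"
              proof
                assume "z \<in> S"
                then obtain c where c: "(c, v) \<in> P" "c \<notin> Mc" "z \<in> desc P c" unfolding S_def by blast
                have "c = z"
                proof (rule ccontr)
                  assume "c \<noteq> z"
                  then have "z \<notin> desc P c" using T.children_disj[OF zy[unfolded yv] c(1)] desc_refl by metis
                  then show False using c(3) by blast
                qed
                then show False using zM c(2) by simp
              qed
              have "anc P z = insert v (insert u (anc P u))" using T.anc_step[OF zy] yv anc_v by simp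
              then show ?thesis using A zS zu zv zTv by (auto simp: F_def)
            next
              case zM: False
              have "(z, v) \<in> P'" using P'keep[OF zy[unfolded yv] zu zv] zM by blast
              then have "anc P' z = insert v (anc P' v)" by (rule T'.anc_step)
              also have "anc P' v = F v" using IHa T.anc_step[OF zy] yv by blast
              finally have A: "anc P' z = insert v (anc P u)" using uv by (simp add: F_def)
              have "(z, v) \<in> P \<and> z \<notin> Mc \<and> z \<in> desc P z" using zy yv zM desc_refl by simp
              then have zS: "z \<in> S" unfolding S_def by blast
              have "anc P z = insert v (insert u (anc P u))" using T.anc_step[OF zy] yv anc_v by simp
              then have "anc P z - {u} = insert v (anc P u)" using u_notin_ancu uv by auto
              then show ?thesis using A zS zu zv by (simp add: F_def)
            qed
          next
            case yv: False
            have y_ne_u: "y \<noteq> u" using yTv u_notin_Tv by blast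
            have "(z, y) \<in> P'" using P'keep[OF zy zu zv] yv by blast
            then have "anc P' z = insert y (anc P' y)" by (rule T'.anc_step)
            also have "anc P' y = F y" using IHa T.anc_step[OF zy] by blast
            finally have A: "anc P' z = insert y (F y)" .
            have SS: "z \<in> S \<longleftrightarrow> y \<in> S"
            proof
              assume "z \<in> S"
              then obtain c where c: "(c, v) \<in> P" "c \<notin> Mc" "z \<in> desc P c" unfolding S_def by blast
              have "z \<noteq> c" using c(1) zy yv T.func by blast
              then have "y \<in> desc P c" using T.desc_parent[OF c(3) _ zy] by blast
              then show "y \<in> S" unfolding S_def using c by blast
            next
              assume "y \<in> S"
              then obtain c where c: "(c, v) \<in> P" "c \<notin> Mc" "y \<in> desc P c" unfolding S_def by blast
              have "z \<in> desc P c" using T.parent_desc[OF zy c(3)] .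
              then show "z \<in> S" unfolding S_def using c by blast
            qed
            have Fy: "F y = (if y \<in> S then anc P y - {u} else anc P y)"
              using y_ne_u yv yTv by (simp add: F_def)
            have "anc P z = insert y (anc P y)" using T.anc_step[OF zy] .
            then show ?thesis using A Fy SS zu zv zTv y_ne_u by (auto simp: F_def)
          qed
        next
          case zTv: False
          have zS: "z \<notin> S" using zTv S_sub by blast
          obtain y where zy: "(z, y) \<in> P" using T.desc_parent_ex[OF zTu zu] by blast
          have yv: "y \<noteq> v" using zTv zy T.child_in_desc T.parent_desc desc_refl by metis
          have "(z, y) \<in> P'" using P'keep[OF zy zu zv] yv by blast
          then have "anc P' z = insert y (anc P' y)" by (rule T'.anc_step)
          also have "anc P' y = F y" using IHa T.anc_step[OF zy] by blast
          finally have A: "anc P' z = insert y (F y)" .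
          have Fz: "F z = insert v (anc P z)" using zu zv zS zTv zTu by (simp add: F_def)
          show ?thesis
          proof (cases "y = u")
            case True
            then show ?thesis using A Fz T.anc_step[OF zy] by (simp add: F_def insert_commute)
          next
            case False
            have yTu: "y \<in> desc P u" using T.desc_parent[OF zTu zu zy] .
            have yTv: "y \<notin> desc P v" using zTv T.parent_desc[OF zy] by blast
            have "y \<notin> S" using yTv S_sub by blast
            then have "F y = insert v (anc P y)" using False yv yTv yTu by (simp add: F_def)
            then show ?thesis using A Fz T.anc_step[OF zy] by (simp add: insert_commute)
          qed
        qed
      next
        case zTu: False
        have Fz: "F z = anc P z" using F_out[OF zTu] .
        show ?thesis
        proof (cases "\<exists>y. (z, y) \<in> P")
          case True
          then obtain y where zy: "(z, y) \<in> P" by blast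
          have yv: "y \<noteq> v" using zTu zy v_in_Tu T.parent_desc by blast
          have yTu: "y \<notin> desc P u" using zTu T.parent_desc[OF zy] by blast
          have "(z, y) \<in> P'" using P'keep[OF zy zu zv] yv by blast
          then have "anc P' z = insert y (anc P' y)" by (rule T'.anc_step)
          also have "anc P' y = F y" using IHa T.anc_step[OF zy] by blast
          also have "F y = anc P y" using F_out[OF yTu] .
          finally show ?thesis using Fz T.anc_step[OF zy] by simp
        next
          case False
          then have "\<And>y. (z, y) \<notin> P'" using P'none zu zv by blast
          then have "anc P' z = {}" by (rule T'.anc_none)
          moreover have "anc P z = {}" using False T.anc_none by blast
          ultimately show ?thesis using Fz by simp
        qed
      qed
    qed
  qed
qed

end

definition isch :: "('a \<Rightarrow> nat) \<Rightarrow> ('a \<times> 'a) set \<Rightarrow> 'a \<Rightarrow> bool" where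
  "isch idx P z \<longleftrightarrow> (\<exists>y\<in>desc P z. idx z < idx y)"

definition ltk :: "('a \<Rightarrow> nat) \<Rightarrow> 'a set set \<Rightarrow> 'a \<Rightarrow> 'a \<Rightarrow> bool" where
  "ltk idx E a z \<longleftrightarrow> (idx z < idx a \<longleftrightarrow> {a, z} \<in> E)"

definition tval :: "('a \<Rightarrow> nat) \<Rightarrow> 'a set set \<Rightarrow> ('a \<times> 'a) set \<Rightarrow> 'a \<Rightarrow> nat" where
  "tval idx E P z = (if isch idx P z then 1 + card {a \<in> anc P z. ltk idx E a z} mod 2 else 0)"

definition colr :: "('a \<Rightarrow> nat) \<Rightarrow> 'a set set \<Rightarrow> 'a set \<Rightarrow> 'a rtree \<Rightarrow> nat" where
  "colr idx E V T = (\<Sum>z\<in>V. tval idx E (snd T) z) mod 3"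

lemma card_insert_filter:
  assumes "finite A" "v \<notin> A"
  shows "card {a \<in> insert v A. Q a} = card {a \<in> A. Q a} + (if Q v then 1 else 0)"
proof (cases "Q v")
  case True
  then have "{a \<in> insert v A. Q a} = insert v {a \<in> A. Q a}" by auto
  then show ?thesis using assms True by simp
next
  case False
  then have "{a \<in> insert v A. Q a} = {a \<in> A. Q a}" by auto
  then show ?thesis using False by simp
qed

lemma card_remove_filter:
  assumes "finite A" "u \<in> A"
  shows "card {a \<in> A - {u}. Q a} + (if Q u then 1 else 0) = card {a \<in> A. Q a}"
proof -
  have "A = insert u (A - {u})" using assms by blast
  then have "card {a \<in> A. Q a} = card {a \<in> insert u (A - {u}). Q a}" by simp
  also have "\<dots> = card {a \<in> A - {u}. Q a} + (if Q u then 1 else 0)"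
    using card_insert_filter[of "A - {u}" u Q] assms by simp
  finally show ?thesis by simp
qed

lemma mod2_Suc_ne: "Suc k mod 2 \<noteq> k mod 2" "k mod 2 \<noteq> Suc k mod 2"
  by presburger+

lemma mod3_neq:
  fixes a b R :: nat
  assumes "a \<noteq> b" "a \<le> b + 2" "b \<le> a + 2"
  shows "(a + R) mod 3 \<noteq> (b + R) mod 3"
  using assms by presburger

context stree begin

lemma thr_max:
  assumes thr: "thr_struct V E idx U" and D: "connected_in E D" "D \<subseteq> V"
    and xy: "x \<in> D" "y \<in> D" "idx x < idx y"
  shows "\<exists>d\<in>D. U d \<and> idx y \<le> idx d \<and> (\<forall>d'\<in>D. idx d' \<le> idx d)"
proof -
  have fin: "finite D" using thr_structD(1)[OF thr] D(2) finite_subset by blast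
  have ne: "idx ` D \<noteq> {}" using xy by blast
  have "Max (idx ` D) \<in> idx ` D" using Max_in[OF finite_imageI[OF fin] ne] .
  then obtain d where d: "d \<in> D" "idx d = Max (idx ` D)" by (metis imageE)
  have dmax: "\<forall>d'\<in>D. idx d' \<le> idx d" using d(2) fin by simp
  have yd: "idx y \<le> idx d" using dmax xy by blast
  have xd: "x \<noteq> d" using xy yd by auto
  have "(x, d) \<in> (ind_rel E D)\<^sup>*" using D(1) xy(1) d(1) unfolding connected_in_def by blast
  then obtain w where w: "(w, d) \<in> ind_rel E D"
    using xd by (metis rtranclE)
  then have wD: "w \<in> D" "{w, d} \<in> E" unfolding ind_rel_def by simp_all
  have wV: "w \<in> V" "d \<in> V" using wD(1) d(1) D(2) by blast+
  have adj: "w \<noteq> d \<and> (idx w < idx d \<and> U d \<or> idx d < idx w \<and> U w)"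
    using thr_structD(4)[OF thr wV] wD(2) by simp
  have "idx w \<le> idx d" using dmax wD(1) by blast
  then have "U d" using adj by auto
  then show ?thesis using d(1) yd dmax by blast
qed

end

locale rotthr = rotctx +
  fixes idx :: "'a \<Rightarrow> nat" and U :: "'a \<Rightarrow> bool"
  assumes thr: "thr_struct V E idx U"
begin

lemma finV: "finite V" using thr_structD(1)[OF thr] .
lemma inj: "x \<in> V \<Longrightarrow> y \<in> V \<Longrightarrow> idx x = idx y \<Longrightarrow> x = y"
  using thr_structD(2)[OF thr] unfolding inj_on_def by blast
lemma adj: "x \<in> V \<Longrightarrow> y \<in> V \<Longrightarrow> {x, y} \<in> E \<longleftrightarrow> (x \<noteq> y \<and> ((idx x < idx y \<and> U y) \<or> (idx y < idx x \<and> U x)))"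
  using thr_structD(4)[OF thr] by blast
lemma adjU: "x \<in> V \<Longrightarrow> y \<in> V \<Longrightarrow> idx x < idx y \<Longrightarrow> U y \<Longrightarrow> {x, y} \<in> E"
  using adj by auto

lemma F_mem: "z \<noteq> u \<Longrightarrow> z \<noteq> v \<Longrightarrow> z \<in> F y \<longleftrightarrow> z \<in> anc P y"
  unfolding F_def using anc_v by auto

lemma desc'_other:
  assumes "z \<noteq> u" "z \<noteq> v"
  shows "desc P' z = desc P z"
proof -
  have "desc P' z = insert z {y. z \<in> anc P' y}" by (rule T'.desc_anc)
  also have "\<dots> = insert z {y. z \<in> anc P y}" using anc'_main F_mem[OF assms] by simp
  also have "\<dots> = desc P z" by (rule T.desc_anc[symmetric])
  finally show ?thesis .
qed

lemma desc'_v: "desc P' v = desc P u"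
proof -
  have "desc P' v = insert v {y. v \<in> F y}" using T'.desc_anc anc'_main by simp
  also have "\<dots> = desc P u"
  proof (intro equalityI subsetI)
    fix y assume y: "y \<in> insert v {y. v \<in> F y}"
    show "y \<in> desc P u"
    proof (cases "y = v")
      case True then show ?thesis using v_in_Tu by simp
    next
      case yv: False
      then have vF: "v \<in> F y" using y by simp
      show ?thesis
      proof (rule ccontr)
        assume "y \<notin> desc P u"
        then have "F y = anc P y" by (rule F_out)
        then have "v \<in> anc P y" using vF by simp
        then have "y \<in> desc P v" using T.anc_desc by blast
        then show False using \<open>y \<notin> desc P u\<close> Tv_sub by blast
      qed
    qed
  next
    fix y assume yTu: "y \<in> desc P u"
    show "y \<in> insert v {y. v \<in> F y}"
    proof (cases "y = u")
      case True then show ?thesis by (simp add: F_def)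
    next
      case yu: False
      show ?thesis
      proof (cases "y = v")
        case True then show ?thesis by simp
      next
        case yv: False
        show ?thesis
        proof (cases "y \<in> desc P v")
          case True
          then have "v \<in> anc P y" using T.anc_desc yv by blast
          then show ?thesis using uv yu yv by (auto simp: F_def)
        next
          case False
          then have "y \<notin> S" using S_sub by blast
          then show ?thesis using False yu yv yTu by (simp add: F_def)
        qed
      qed
    qed
  qed
  finally show ?thesis .
qed

lemma desc'_u_sub: "desc P' u \<subseteq> desc P u"
proof
  fix y assume "y \<in> desc P' u"
  then have y: "y \<in> insert u {y. u \<in> F y}" using T'.desc_anc anc'_main by simp
  show "y \<in> desc P u"
  proof (rule ccontr)
    assume yn: "y \<notin> desc P u"
    then have "y \<noteq> u" using desc_refl by metis
    then have "u \<in> F y" using y by simp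
    then have "u \<in> anc P y" using F_out[OF yn] by simp
    then show False using yn T.anc_desc by blast
  qed
qed

lemma desc'_u_Mc: "c \<in> Mc \<Longrightarrow> desc P c \<subseteq> desc P' u"
proof
  fix y assume cM: "c \<in> Mc" and yc: "y \<in> desc P c"
  have cv: "(c, v) \<in> P" using cM unfolding Mc_def by simp
  have yTv: "y \<in> desc P v - {v}" using T.child_desc[OF cv] yc by blast
  have yu: "y \<noteq> u" using yTv u_notin_Tv by blast
  have yS: "y \<notin> S"
  proof
    assume "y \<in> S"
    then obtain c' where c': "(c', v) \<in> P" "c' \<notin> Mc" "y \<in> desc P c'" unfolding S_def by blast
    have "c \<noteq> c'" using cM c'(2) by blast
    then show False using T.children_disj[OF cv c'(1) _ yc] c'(3) by blast
  qed
  have "F y = anc P y" using yS yTv yu by (simp add: F_def)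
  moreover have "u \<in> anc P y"
    using T.anc_desc yTv Tv_sub T.desc_trans v_in_Tu yu by blast
  ultimately have "u \<in> anc P' y" using anc'_main by simp
  then show "y \<in> desc P' u" using T'.desc_anc by blast
qed

lemma S_lemma:
  assumes zS: "z \<in> S" and ch: "isch idx P z"
  shows "\<not> ltk idx E u z"
proof
  assume lt: "ltk idx E u z"
  obtain c where c: "(c, v) \<in> P" "c \<notin> Mc" "z \<in> desc P c" using zS unfolding S_def by blast
  have noE: "\<And>s. s \<in> desc P c \<Longrightarrow> {u, s} \<notin> E" using c(1,2) unfolding Mc_def by blast
  obtain y where y: "y \<in> desc P z" "idx z < idx y" using ch unfolding isch_def by blast
  have yc: "y \<in> desc P c" using T.desc_trans[OF c(3) y(1)] .
  have cV: "c \<in> V" using T.PV1[OF c(1)] .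
  have Dsub: "desc P c \<subseteq> V" using T.desc_V[OF cV] .
  obtain d where d: "d \<in> desc P c" "U d" "idx y \<le> idx d"
    using T.thr_max[OF thr T.conn[OF cV] Dsub c(3) yc y(2)] by blast
  have "{u, z} \<notin> E" using noE c(3) by blast
  then have "\<not> idx z < idx u" using lt unfolding ltk_def by simp
  then have "idx u < idx d" using y(2) d(3) by simp
  then have "{u, d} \<in> E" using adjU uV Dsub d(1,2) by blast
  then show False using noE d(1) by blast
qed

lemma O_lemma:
  assumes zTu: "z \<in> desc P u" and zTv: "z \<notin> desc P v" and zu: "z \<noteq> u" and ch: "isch idx P z"
  shows "\<not> ltk idx E v z"
proof
  assume lt: "ltk idx E v z"
  obtain c where c: "(c, u) \<in> P" "z \<in> desc P c" using T.desc_child[OF zTu zu] by blast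
  have cv: "c \<noteq> v" using c(2) zTv by blast
  obtain y where y: "y \<in> desc P z" "idx z < idx y" using ch unfolding isch_def by blast
  have yc: "y \<in> desc P c" using T.desc_trans[OF c(2) y(1)] .
  have cV: "c \<in> V" using T.PV1[OF c(1)] .
  have Dsub: "desc P c \<subseteq> V" using T.desc_V[OF cV] .
  obtain d where d: "d \<in> desc P c" "U d" "idx y \<le> idx d"
    using T.thr_max[OF thr T.conn[OF cV] Dsub c(2) yc y(2)] by blast
  have "{v, z} \<notin> E" using T.sep[OF vu desc_refl zTu zu zTv] .
  then have "\<not> idx z < idx v" using lt unfolding ltk_def by simp
  then have "idx v < idx d" using y(2) d(3) by simp
  then have E1: "{v, d} \<in> E" using adjU vV Dsub d(1,2) by blast
  have dTu: "d \<in> desc P u" "d \<noteq> u" using T.child_desc[OF c(1)] d(1) by blast+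
  have dTv: "d \<notin> desc P v" using T.children_disj[OF c(1) vu cv d(1)] .
  have "{v, d} \<notin> E" using T.sep[OF vu desc_refl dTu dTv] .
  then show False using E1 by simp
qed

lemma finite_anc: "finite (anc Q z)" if "anc Q z \<subseteq> V" for Q
  using that finV finite_subset by blast

lemma tval_other:
  assumes zu: "z \<noteq> u" and zv: "z \<noteq> v"
  shows "tval idx E P' z = tval idx E P z"
proof -
  have ch: "isch idx P' z = isch idx P z" unfolding isch_def using desc'_other[OF zu zv] by simp
  have A: "anc P' z = F z" by (rule anc'_main)
  show ?thesis
  proof (cases "isch idx P z")
    case False then show ?thesis using ch unfolding tval_def by simp
  next
    case True
    have "{a \<in> anc P' z. ltk idx E a z} = {a \<in> anc P z. ltk idx E a z}"
    proof (cases "z \<in> S")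
      case zS: True
      then have "F z = anc P z - {u}" using zu zv by (simp add: F_def)
      moreover have "\<not> ltk idx E u z" using S_lemma[OF zS True] .
      ultimately show ?thesis using A by auto
    next
      case zS: False
      show ?thesis
      proof (cases "z \<in> desc P v")
        case True
        then have "F z = anc P z" using zu zv zS by (simp add: F_def)
        then show ?thesis using A by simp
      next
        case zTv: False
        show ?thesis
        proof (cases "z \<in> desc P u")
          case zTu: True
          then have "F z = insert v (anc P z)" using zu zv zS zTv by (simp add: F_def)
          moreover have "\<not> ltk idx E v z" using O_lemma[OF zTu zTv zu \<open>isch idx P z\<close>] .
          ultimately show ?thesis using A by auto
        next
          case False
          then have "F z = anc P z" using F_out by simp
          then show ?thesis using A by simp
        qed
      qed
    qed
    then show ?thesis using ch unfolding tval_def by simp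
  qed
qed

lemma ltk_xor: "ltk idx E u v \<longleftrightarrow> \<not> ltk idx E v u"
proof -
  have "idx u \<noteq> idx v" using inj uV vV uv by blast
  then show ?thesis unfolding ltk_def by (auto simp: insert_commute)
qed

lemma card_u:
  "card {a \<in> anc P' u. ltk idx E a u} = card {a \<in> anc P u. ltk idx E a u} + (if ltk idx E v u then 1 else 0)"
proof -
  have eq: "anc P' u = insert v (anc P u)" using anc'_main by (simp add: F_def)
  have fin: "finite (anc P u)" using T.anc_V finV finite_subset by blast
  have "card {a \<in> insert v (anc P u). ltk idx E a u} = card {a \<in> anc P u. ltk idx E a u} + (if ltk idx E v u then 1 else 0)"
    by (rule card_insert_filter[OF fin v_notin_ancu])
  then show ?thesis unfolding eq .
qed

lemma card_v:
  "card {a \<in> anc P' v. ltk idx E a v} + (if ltk idx E u v then 1 else 0) = card {a \<in> anc P v. ltk idx E a v}"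
proof -
  have eq: "anc P' v = anc P v - {u}" using anc'_main uv anc_v u_notin_ancu by (simp add: F_def)
  have fin: "finite (anc P v)" using T.anc_V finV finite_subset by blast
  have uin: "u \<in> anc P v" using anc_v by simp
  have "card {a \<in> anc P v - {u}. ltk idx E a v} + (if ltk idx E u v then 1 else 0) = card {a \<in> anc P v. ltk idx E a v}"
    by (rule card_remove_filter[OF fin uin])
  then show ?thesis unfolding eq .
qed

lemma tval_bound: "tval idx E Q z \<le> 2"
  unfolding tval_def by auto

lemma uv_change:
  "tval idx E P' u + tval idx E P' v \<noteq> tval idx E P u + tval idx E P v \<and>
   tval idx E P' u + tval idx E P' v \<le> tval idx E P u + tval idx E P v + 2 \<and>
   tval idx E P u + tval idx E P v \<le> tval idx E P' u + tval idx E P' v + 2"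
proof -
  define ku where "ku = card {a \<in> anc P u. ltk idx E a u}"
  define kv where "kv = card {a \<in> anc P v. ltk idx E a v}"
  define ku' where "ku' = card {a \<in> anc P' u. ltk idx E a u}"
  define kv' where "kv' = card {a \<in> anc P' v. ltk idx E a v}"
  have cu: "ku' = ku + (if ltk idx E v u then 1 else 0)" using card_u ku_def ku'_def by simp
  have cv: "kv' + (if ltk idx E u v then 1 else 0) = kv" using card_v kv_def kv'_def by simp
  have Tu_conn: "connected_in E (desc P u)" using T.conn[OF uV] .
  have Tu_V: "desc P u \<subseteq> V" using T.desc_V[OF uV] .
  have ivu: "idx v \<noteq> idx u" using inj uV vV uv by metis
  have tu: "tval idx E P u = (if isch idx P u then 1 + ku mod 2 else 0)" unfolding tval_def ku_def by simp
  have tv: "tval idx E P v = (if isch idx P v then 1 + kv mod 2 else 0)" unfolding tval_def kv_def by simp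
  have tu': "tval idx E P' u = (if isch idx P' u then 1 + ku' mod 2 else 0)" unfolding tval_def ku'_def by simp
  have tv': "tval idx E P' v = (if isch idx P' v then 1 + kv' mod 2 else 0)" unfolding tval_def kv'_def by simp
  show ?thesis
  proof (cases "isch idx P u")
    case False
    then have umax: "\<And>y. y \<in> desc P u \<Longrightarrow> idx y \<le> idx u" unfolding isch_def by force
    have nu': "\<not> isch idx P' u" using desc'_u_sub umax unfolding isch_def by force
    have vlt: "idx v < idx u" using umax[OF v_in_Tu] ivu by simp
    have v': "isch idx P' v" unfolding isch_def using desc'_v desc_refl vlt by metis
    obtain d where d: "d \<in> desc P u" "U d" "idx u \<le> idx d"
      using T.thr_max[OF thr Tu_conn Tu_V v_in_Tu desc_refl vlt] by blast
    have "d = u" using umax[OF d(1)] d(3) inj Tu_V d(1) uV by (metis le_antisym subsetD)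
    then have "U u" using d(2) by simp
    then have "{v, u} \<in> E" using adjU vV uV vlt by blast
    then have luv: "ltk idx E u v" unfolding ltk_def using vlt by (simp add: insert_commute)
    then have "kv = kv' + 1" using cv by simp
    then show ?thesis using tu tv tu' tv' False nu' v' by (auto simp: mod2_Suc_ne)
  next
    case True
    obtain y where y: "y \<in> desc P u" "idx u < idx y" using True unfolding isch_def by blast
    obtain m where m0: "m \<in> desc P u" "U m" "idx y \<le> idx m" "\<forall>d'\<in>desc P u. idx d' \<le> idx m"
      using T.thr_max[OF thr Tu_conn Tu_V desc_refl y(1) y(2)] by blast
    have m: "m \<in> desc P u" "U m" "\<And>d'. d' \<in> desc P u \<Longrightarrow> idx d' \<le> idx m"
      using m0 by simp_all
    have um: "idx u < idx m" using y(2) m0(3) by simp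
    have mV: "m \<in> V" using m(1) Tu_V by blast
    have mu: "m \<noteq> u" using um by blast
    show ?thesis
    proof (cases "v = m")
      case True
      have nv: "\<not> isch idx P v"
      proof
        assume "isch idx P v"
        then obtain w where w: "w \<in> desc P v" "idx v < idx w" unfolding isch_def by blast
        then have "w \<in> desc P u" using Tv_sub by blast
        then have "idx w \<le> idx m" by (rule m(3))
        then show False using True w(2) by simp
      qed
      have nv': "\<not> isch idx P' v"
      proof
        assume "isch idx P' v"
        then obtain w where w: "w \<in> desc P' v" "idx v < idx w" unfolding isch_def by blast
        then have "w \<in> desc P u" using desc'_v by blast
        then have "idx w \<le> idx m" by (rule m(3))
        then show False using True w(2) by simp
      qed
      have "{u, v} \<in> E" using adjU[OF uV vV] um True m(2) by simp
      then have "{v, u} \<in> E" by (simp add: insert_commute)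
      then have "ltk idx E v u" unfolding ltk_def using um True by simp
      then have "ku' = ku + 1" using cu by simp
      then show ?thesis using tu tv tu' tv' \<open>isch idx P u\<close> nv nv' by (auto simp: mod2_Suc_ne)
    next
      case False
      have mTv: "m \<in> desc P v"
      proof (rule ccontr)
        assume mn: "m \<notin> desc P v"
        have "idx v \<le> idx m" using m(3) v_in_Tu by blast
        then have "idx v < idx m" using False inj vV mV by (metis le_neq_implies_less)
        then have "{v, m} \<in> E" using adjU vV mV m(2) by blast
        moreover have "{v, m} \<notin> E" using T.sep[OF vu desc_refl m(1) mu mn] .
        ultimately show False by simp
      qed
      have vm: "idx v < idx m"
        using m(3) v_in_Tu False inj vV mV by (metis le_neq_implies_less)
      have chv: "isch idx P v" unfolding isch_def using mTv vm by blast
      have chv': "isch idx P' v" unfolding isch_def using desc'_v m(1) vm by blast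
      obtain c where c: "(c, v) \<in> P" "m \<in> desc P c" using T.desc_child[OF mTv] False by metis
      have "{u, m} \<in> E" using adjU uV mV um m(2) by blast
      then have "c \<in> Mc" unfolding Mc_def using c by blast
      then have "m \<in> desc P' u" using desc'_u_Mc c(2) by blast
      then have chu': "isch idx P' u" unfolding isch_def using um by blast
      show ?thesis
      proof (cases "ltk idx E v u")
        case True
        then have "\<not> ltk idx E u v" using ltk_xor by simp
        then have "kv' = kv" "ku' = ku + 1" using cu cv True by simp_all
        then show ?thesis using tu tv tu' tv' \<open>isch idx P u\<close> chv chv' chu' by (auto simp: mod2_Suc_ne)
      next
        case False
        then have "ltk idx E u v" using ltk_xor by simp
        then have "kv = kv' + 1" "ku' = ku" using cu cv False by simp_all
        then show ?thesis using tu tv tu' tv' \<open>isch idx P u\<close> chv chv' chu' by (auto simp: mod2_Suc_ne)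
      qed
    qed
  qed
qed

lemma colr_change: "colr idx E V (r', P') \<noteq> colr idx E V (r, P)"
proof -
  have fin: "finite V" by (rule finV)
  have R: "(\<Sum>z\<in>V - {u, v}. tval idx E P' z) = (\<Sum>z\<in>V - {u, v}. tval idx E P z)"
    using tval_other by (intro sum.cong) auto
  have split: "\<And>Q. (\<Sum>z\<in>V. tval idx E Q z) = tval idx E Q u + tval idx E Q v + (\<Sum>z\<in>V - {u, v}. tval idx E Q z)"
  proof -
    fix Q
    have "(\<Sum>z\<in>V. tval idx E Q z) = tval idx E Q u + (\<Sum>z\<in>V - {u}. tval idx E Q z)"
      using sum.remove[OF fin uV] by simp
    also have "(\<Sum>z\<in>V - {u}. tval idx E Q z) = tval idx E Q v + (\<Sum>z\<in>V - {u} - {v}. tval idx E Q z)"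
      using sum.remove[of "V - {u}" v] fin vV uv by simp
    also have "V - {u} - {v} = V - {u, v}" by blast
    finally show "(\<Sum>z\<in>V. tval idx E Q z) = tval idx E Q u + tval idx E Q v + (\<Sum>z\<in>V - {u, v}. tval idx E Q z)"
      by simp
  qed
  show ?thesis
    unfolding colr_def snd_conv split R
    using mod3_neq[of "tval idx E P' u + tval idx E P' v" "tval idx E P u + tval idx E P v"
        "\<Sum>z\<in>V - {u, v}. tval idx E P z"] uv_change by (simp add: add.assoc)
qed

end

lemma rot_step_colr:
  assumes thr: "thr_struct V E idx U"
    and T: "T \<in> search_trees E V" and T': "T' \<in> search_trees E V"
    and st: "rot_step E T T'"
  shows "colr idx E V T' \<noteq> colr idx E V T"
proof -
  obtain r P where TT: "T = (r, P)" by (cases T)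
  obtain r' P' where TT': "T' = (r', P')" by (cases T')
  obtain u v where uv: "(v, u) \<in> P" "T' = rotate E T u v"
    using st unfolding rot_step_def TT by auto
  have s1: "stinv E V r P" using T TT search_tree_stinv unfolding search_trees_def by auto
  have s2: "stinv E V r' P'" using T' TT' search_tree_stinv unfolding search_trees_def by auto
  interpret R: rotthr E V r P r' P' u v idx U
  proof (unfold_locales)
    show "stinv E V r P" by (rule s1)
    show "stinv E V r' P'" by (rule s2)
    show "(v, u) \<in> P" by (rule uv(1))
    show "rotate E (r, P) u v = (r', P')" using uv(2) TT TT' by simp
    show "thr_struct V E idx U" by (rule thr)
  qed
  show ?thesis using R.colr_change TT TT' by simp
qed

lemma upper:
  assumes "threshold V E"
  shows "colorable (search_trees E V) (rot_adj E) 3"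
proof -
  obtain idx U where thr: "thr_struct V E idx U" using threshold_struct[OF assms] by blast
  show ?thesis unfolding colorable_def
  proof (intro exI[of _ "colr idx E V"] conjI ballI impI)
    show "colr idx E V ` search_trees E V \<subseteq> {..<3}" unfolding colr_def by auto
  next
    fix x y assume x: "x \<in> search_trees E V" and y: "y \<in> search_trees E V" and a: "rot_adj E x y"
    show "colr idx E V x \<noteq> colr idx E V y"
      using a unfolding rot_adj_def
    proof
      assume "rot_step E x y"
      then show ?thesis using rot_step_colr[OF thr x y] by metis
    next
      assume "rot_step E y x"
      then show ?thesis using rot_step_colr[OF thr y x] by metis
    qed
  qed
qed

primrec chT :: "'a list \<Rightarrow> 'a rtree \<Rightarrow> 'a rtree" where
  "chT [] T = T"
| "chT (x # xs) T = (x, insert (fst (chT xs T), x) (snd (chT xs T)))"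

lemma comps_empty: "components E {} = {}"
  unfolding components_def by simp

lemma st_single: "search_tree E {x} x {}"
proof (rule search_tree.intros[where rt = "\<lambda>_. x" and Pf = "\<lambda>_. {}"])
  show "x \<in> {x}" by simp
  show "connected_in E {x}" unfolding connected_in_def by simp
  show "\<forall>C\<in>components E ({x} - {x}). (\<lambda>_. x) C \<in> C \<and> search_tree E C ((\<lambda>_. x) C) ((\<lambda>_. {}) C)"
    by (simp add: comps_empty)
  show "{} = (\<Union>C\<in>components E ({x} - {x}). insert ((\<lambda>_. x) C, x) ((\<lambda>_. {}) C))"
    by (simp add: comps_empty)
qed

lemma st_top:
  assumes "x \<notin> S" "connected_in E (insert x S)" "connected_in E S" "search_tree E S s Q"
  shows "search_tree E (insert x S) x (insert (s, x) Q)"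
proof (rule search_tree.intros[where rt = "\<lambda>_. s" and Pf = "\<lambda>_. Q"])
  have SS: "insert x S - {x} = S" using assms(1) by blast
  have C: "components E (insert x S - {x}) = {S}" unfolding SS by (rule comp_connected[OF assms(3)])
  have sS: "s \<in> S" using stinvD(1)[OF search_tree_stinv[OF assms(4)]] .
  show "x \<in> insert x S" by simp
  show "connected_in E (insert x S)" by (rule assms(2))
  show "\<forall>C\<in>components E (insert x S - {x}). (\<lambda>_. s) C \<in> C \<and> search_tree E C ((\<lambda>_. s) C) ((\<lambda>_. Q) C)"
    unfolding C using sS assms(4) by simp
  show "insert (s, x) Q = (\<Union>C\<in>components E (insert x S - {x}). insert ((\<lambda>_. s) C, x) ((\<lambda>_. Q) C))"
    unfolding C by simp
qed

lemma st_two_leaves: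
  assumes "x \<noteq> a" "x \<noteq> c" "a \<noteq> c" "{a, c} \<notin> E" "{a, a} \<notin> E" "{c, c} \<notin> E"
    "connected_in E {x, a, c}"
  shows "search_tree E {x, a, c} x {(a, x), (c, x)}"
proof (rule search_tree.intros[where rt = "\<lambda>C. if C = {a} then a else c" and Pf = "\<lambda>_. {}"])
  have SS: "{x, a, c} - {x} = {a, c}" using assms by blast
  have IR: "ind_rel E {a, c} = {}"
    using assms(4,5,6) unfolding ind_rel_def by (auto simp: insert_commute)
  have C: "components E ({x, a, c} - {x}) = {{a}, {c}}"
    unfolding SS components_def IR using assms(3) by auto
  show "x \<in> {x, a, c}" by simp
  show "connected_in E {x, a, c}" by (rule assms(7))
  show "\<forall>C\<in>components E ({x, a, c} - {x}). (if C = {a} then a else c) \<in> C \<and>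
      search_tree E C (if C = {a} then a else c) {}"
    unfolding C using st_single assms(3) by auto
  show "{(a, x), (c, x)} = (\<Union>C\<in>components E ({x, a, c} - {x}). insert (if C = {a} then a else c, x) {})"
    unfolding C using assms(3) by auto
qed

lemma desc_leaf: "(\<And>y. (y, x) \<notin> P) \<Longrightarrow> desc P x = {x}"
  unfolding desc_def by (auto elim: rtranclE)

lemma desc_insert_top:
  assumes "x \<notin> fst ` Q" "y \<noteq> x"
  shows "desc (insert (a, x) Q) y = desc Q y"
proof
  show "desc Q y \<subseteq> desc (insert (a, x) Q) y" by (rule desc_mono) blast
  show "desc (insert (a, x) Q) y \<subseteq> desc Q y"
  proof
    fix z assume "z \<in> desc (insert (a, x) Q) y"
    then have "(z, y) \<in> (insert (a, x) Q)\<^sup>*" unfolding desc_def by simp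
    then have "(z, y) \<in> Q\<^sup>* \<or> ((z, a) \<in> Q\<^sup>* \<and> (x, y) \<in> Q\<^sup>*)" by (simp add: rtrancl_insert)
    moreover have "(x, y) \<notin> Q\<^sup>*"
    proof
      assume "(x, y) \<in> Q\<^sup>*"
      then show False using assms by (cases rule: converse_rtranclE) force+
    qed
    ultimately show "z \<in> desc Q y" unfolding desc_def by simp
  qed
qed

lemma rotate_top:
  assumes x: "x \<notin> fst ` Q" "x \<noteq> u" "x \<noteq> v" and av: "a \<noteq> v"
  shows "rotate E (x, insert (a, x) Q) u v = (x, insert (if u = a then v else a, x) (snd (rotate E (a, Q) u v)))"
proof -
  have D: "\<And>y. y \<noteq> x \<Longrightarrow> desc (insert (a, x) Q) y = desc Q y" using desc_insert_top[OF x(1)] by blast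
  have K1: "{(x', y) \<in> insert (a, x) Q. x' \<noteq> u \<and> x' \<noteq> v \<and> \<not> (y = v \<and> (\<exists>s\<in>desc (insert (a, x) Q) x'. {u, s} \<in> E))}
     = (if a \<noteq> u then {(a, x)} else {}) \<union> {(x', y) \<in> Q. x' \<noteq> u \<and> x' \<noteq> v \<and> \<not> (y = v \<and> (\<exists>s\<in>desc Q x'. {u, s} \<in> E))}"
  proof -
    have "\<And>x' y. (x', y) \<in> Q \<Longrightarrow> desc (insert (a, x) Q) x' = desc Q x'"
      using D x(1) by (metis fst_conv image_eqI)
    then show ?thesis using av x(3) by auto
  qed
  have K2: "{(c, u) |c. (c, v) \<in> insert (a, x) Q \<and> (\<exists>s\<in>desc (insert (a, x) Q) c. {u, s} \<in> E)}
     = {(c, u) |c. (c, v) \<in> Q \<and> (\<exists>s\<in>desc Q c. {u, s} \<in> E)}"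
  proof -
    have "\<And>c. (c, v) \<in> Q \<Longrightarrow> desc (insert (a, x) Q) c = desc Q c"
      using D x(1) by (metis fst_conv image_eqI)
    then show ?thesis using x(3) by auto
  qed
  have K4: "{(v, p) |p. (u, p) \<in> insert (a, x) Q} = (if u = a then {(v, x)} else {}) \<union> {(v, p) |p. (u, p) \<in> Q}"
    by auto
  show ?thesis
    unfolding rotate_def Let_def fst_conv snd_conv K1 K2 K4 using x(2) by auto
qed

lemma chT_tree:
  assumes "distinct xs" "set xs \<inter> B = {}" "\<And>S. S \<subseteq> set xs \<Longrightarrow> connected_in E (S \<union> B)"
    "search_tree E B (fst T) (snd T)"
  shows "search_tree E (set xs \<union> B) (fst (chT xs T)) (snd (chT xs T))"
  using assms
proof (induction xs)
  case Nil then show ?case by simp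
next
  case (Cons x xs)
  have IH: "search_tree E (set xs \<union> B) (fst (chT xs T)) (snd (chT xs T))"
    using Cons by auto
  have xn: "x \<notin> set xs \<union> B" using Cons.prems(1,2) by auto
  have c1: "connected_in E (insert x (set xs \<union> B))" using Cons.prems(3)[of "set (x # xs)"] by simp
  have c2: "connected_in E (set xs \<union> B)" using Cons.prems(3)[of "set xs"] by auto
  have "search_tree E (insert x (set xs \<union> B)) x (insert (fst (chT xs T), x) (snd (chT xs T)))"
    by (rule st_top[OF xn c1 c2 IH])
  then show ?case by simp
qed

lemma chT_field:
  assumes "snd T \<subseteq> B \<times> B" "fst T \<in> B"
  shows "snd (chT xs T) \<subseteq> (set xs \<union> B) \<times> (set xs \<union> B) \<and> fst (chT xs T) \<in> set xs \<union> B"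
  using assms by (induction xs) auto

lemma chT_mono: "snd T \<subseteq> snd (chT xs T)"
  by (induction xs) auto

lemma rotate_fst: "fst (rotate E (a, Q) u v) = (if u = a then v else a)"
  unfolding rotate_def Let_def by simp

lemma chT_rot:
  assumes "distinct xs" "set xs \<inter> B = {}" "u \<in> B" "v \<in> B" "snd T \<subseteq> B \<times> B" "fst T \<in> B" "fst T \<noteq> v"
  shows "rotate E (chT xs T) u v = chT xs (rotate E T u v)"
  using assms
proof (induction xs)
  case Nil then show ?case by simp
next
  case (Cons x xs)
  define a where "a = fst (chT xs T)"
  define Q where "Q = snd (chT xs T)"
  have aQ: "chT xs T = (a, Q)" unfolding a_def Q_def by simp
  have IH: "rotate E (a, Q) u v = chT xs (rotate E T u v)" using Cons aQ by auto
  have F: "Q \<subseteq> (set xs \<union> B) \<times> (set xs \<union> B)" "a \<in> set xs \<union> B"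
    using chT_field[OF Cons.prems(5,6), of xs] unfolding a_def Q_def by auto
  have xn: "x \<notin> set xs \<union> B" using Cons.prems(1,2) by auto
  have x1: "x \<notin> fst ` Q" using F(1) xn by auto
  have x2: "x \<noteq> u" "x \<noteq> v" using xn Cons.prems(3,4) by auto
  have av: "a \<noteq> v"
  proof (cases xs)
    case Nil then show ?thesis using Cons.prems(7) unfolding a_def by simp
  next
    case (Cons y ys)
    then have "a = y" unfolding a_def by simp
    then show ?thesis using Cons.prems(2,4) \<open>xs = y # ys\<close> by (metis Cons.prems(2) \<open>xs = y # ys\<close> disjoint_iff list.set_intros(1) list.set_intros(2) local.Cons)
  qed
  have "rotate E (chT (x # xs) T) u v = rotate E (x, insert (a, x) Q) u v"
    unfolding a_def Q_def by simp
  also have "\<dots> = (x, insert (if u = a then v else a, x) (snd (rotate E (a, Q) u v)))"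
    by (rule rotate_top[OF x1 x2 av])
  also have "\<dots> = (x, insert (fst (rotate E (a, Q) u v), x) (snd (rotate E (a, Q) u v)))"
    by (simp add: rotate_fst)
  also have "\<dots> = chT (x # xs) (rotate E T u v)" using IH by simp
  finally show ?case .
qed

lemma conn_hub:
  assumes "w \<in> S" "\<And>x. x \<in> S \<Longrightarrow> x \<noteq> w \<Longrightarrow> {x, w} \<in> E"
  shows "connected_in E S"
  unfolding connected_in_def
proof (intro conjI ballI)
  show "S \<noteq> {}" using assms(1) by blast
  have to: "\<And>x. x \<in> S \<Longrightarrow> (x, w) \<in> (ind_rel E S)\<^sup>*"
  proof -
    fix x assume x: "x \<in> S"
    show "(x, w) \<in> (ind_rel E S)\<^sup>*"
    proof (cases "x = w")
      case True then show ?thesis by simp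
    next
      case False
      then have "(x, w) \<in> ind_rel E S" using x assms unfolding ind_rel_def by simp
      then show ?thesis by simp
    qed
  qed
  fix x y assume "x \<in> S" "y \<in> S"
  then have "(x, w) \<in> (ind_rel E S)\<^sup>*" "(y, w) \<in> (ind_rel E S)\<^sup>*" using to by simp_all
  then show "(x, y) \<in> (ind_rel E S)\<^sup>*" using ind_rel_rtrancl_sym rtrancl_trans by metis
qed

locale p3 =
  fixes E :: "'a set set" and a w c :: 'a
  assumes d: "a \<noteq> w" "w \<noteq> c" "a \<noteq> c"
    and e: "{a, w} \<in> E" "{c, w} \<in> E" "{a, c} \<notin> E" "\<And>x. {x, x} \<notin> E"
begin

lemma e': "{w, a} \<in> E" "{w, c} \<in> E" "{c, a} \<notin> E"
  using e by (simp_all add: insert_commute)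

lemma cB: "connected_in E {a, w, c}"
  by (rule conn_hub[where w = w]) (use e e' d in auto)

lemma c_wc: "connected_in E {w, c}" by (rule conn_hub[where w = w]) (use e e' in auto)
lemma c_cw: "connected_in E {c, w}" by (rule conn_hub[where w = w]) (use e e' in auto)
lemma c_aw: "connected_in E {a, w}" by (rule conn_hub[where w = w]) (use e e' in auto)
lemma c_wa: "connected_in E {w, a}" by (rule conn_hub[where w = w]) (use e e' in auto)
lemma c_single: "connected_in E {x}" by (rule conn_hub[where w = x]) auto

definition "T1 = (w, {(a, w), (c, w)})"
definition "T2 = (a, {(w, a), (c, w)})"
definition "T3 = (a, {(c, a), (w, c)})"
definition "T4 = (c, {(a, c), (w, a)})"
definition "T5 = (c, {(w, c), (a, w)})"

lemma B1: "{a, w, c} = {w, a, c}" "{a, w, c} = insert a {w, c}" "{a, w, c} = insert a {c, w}"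
  "{a, w, c} = insert c {a, w}" "{a, w, c} = insert c {w, a}"
  by auto

lemma st1: "search_tree E {a, w, c} (fst T1) (snd T1)"
  unfolding T1_def B1(1) using st_two_leaves[of w a c E] d e cB B1(1) by (simp add: eq_commute)

lemma st_pair:
  assumes "x \<noteq> y" "connected_in E {x, y}"
  shows "search_tree E {x, y} x {(y, x)}"
proof -
  have "search_tree E (insert x {y}) x (insert (y, x) {})"
    by (rule st_top[OF _ _ c_single st_single]) (use assms in auto)
  then show ?thesis by simp
qed

lemma st2: "search_tree E {a, w, c} (fst T2) (snd T2)"
proof -
  have "search_tree E (insert a {w, c}) a (insert (w, a) {(c, w)})"
    by (rule st_top[OF _ _ c_wc st_pair]) (use d cB B1 c_wc in auto)
  then show ?thesis unfolding T2_def using B1(2) by simp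
qed

lemma st3: "search_tree E {a, w, c} (fst T3) (snd T3)"
proof -
  have "search_tree E (insert a {c, w}) a (insert (c, a) {(w, c)})"
    by (rule st_top[OF _ _ c_cw st_pair]) (use d cB B1 c_cw in auto)
  then show ?thesis unfolding T3_def using B1(3) by simp
qed

lemma st4: "search_tree E {a, w, c} (fst T4) (snd T4)"
proof -
  have "search_tree E (insert c {a, w}) c (insert (a, c) {(w, a)})"
    by (rule st_top[OF _ _ c_aw st_pair]) (use d cB B1 c_aw in auto)
  then show ?thesis unfolding T4_def using B1(4) by simp
qed

lemma st5: "search_tree E {a, w, c} (fst T5) (snd T5)"
proof -
  have "search_tree E (insert c {w, a}) c (insert (w, c) {(a, w)})"
    by (rule st_top[OF _ _ c_wa st_pair]) (use d cB B1 c_wa in auto)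
  then show ?thesis unfolding T5_def using B1(5) by simp
qed

lemma r12: "rotate E T1 w a = T2"
proof -
  have D: "desc {(a, w), (c, w)} a = {a}" by (rule desc_leaf) (use d in auto)
  show ?thesis unfolding T1_def T2_def rotate_def Let_def using d D by auto
qed

lemma r23: "rotate E T2 w c = T3"
proof -
  have D: "desc {(w, a), (c, w)} c = {c}" by (rule desc_leaf) (use d in auto)
  show ?thesis unfolding T2_def T3_def rotate_def Let_def using d D by auto
qed

lemma r34: "rotate E T3 a c = T4"
proof -
  have D: "desc {(c, a), (w, c)} w = {w}" by (rule desc_leaf) (use d in auto)
  show ?thesis unfolding T3_def T4_def rotate_def Let_def using d D e by auto
qed

lemma r45: "rotate E T4 a w = T5"
proof -
  have D: "desc {(a, c), (w, a)} w = {w}" by (rule desc_leaf) (use d in auto)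
  show ?thesis unfolding T4_def T5_def rotate_def Let_def using d D by auto
qed

lemma r51: "rotate E T5 c w = T1"
proof -
  have D: "desc {(w, c), (a, w)} a = {a}" by (rule desc_leaf) (use d in auto)
  show ?thesis unfolding T5_def T1_def rotate_def Let_def using d D e' by auto
qed

end

lemma thr_max_g:
  assumes thr: "thr_struct V E idx U" and D: "connected_in E D" "D \<subseteq> V"
    and xy: "x \<in> D" "y \<in> D" "idx x < idx y"
  shows "\<exists>d\<in>D. U d \<and> idx y \<le> idx d \<and> (\<forall>d'\<in>D. idx d' \<le> idx d)"
proof -
  have fin: "finite D" using thr_structD(1)[OF thr] D(2) finite_subset by blast
  have ne: "idx ` D \<noteq> {}" using xy by blast
  have "Max (idx ` D) \<in> idx ` D" using Max_in[OF finite_imageI[OF fin] ne] .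
  then obtain d where d: "d \<in> D" "idx d = Max (idx ` D)" by (metis imageE)
  have dmax: "\<forall>d'\<in>D. idx d' \<le> idx d" using d(2) fin by simp
  have yd: "idx y \<le> idx d" using dmax xy by blast
  have xd: "x \<noteq> d" using xy yd by auto
  have "(x, d) \<in> (ind_rel E D)\<^sup>*" using D(1) xy(1) d(1) unfolding connected_in_def by blast
  then obtain w where w: "(w, d) \<in> ind_rel E D"
    using xd by (metis rtranclE)
  then have wD: "w \<in> D" "{w, d} \<in> E" unfolding ind_rel_def by simp_all
  have wV: "w \<in> V" "d \<in> V" using wD(1) d(1) D(2) by blast+
  have adj: "w \<noteq> d \<and> (idx w < idx d \<and> U d \<or> idx d < idx w \<and> U w)"
    using thr_structD(4)[OF thr wV] wD(2) by simp
  have "idx w \<le> idx d" using dmax wD(1) by blast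
  then have "U d" using adj by auto
  then show ?thesis using d(1) yd dmax by blast
qed

context p3 begin

lemma chain_steps:
  assumes "distinct xs" "set xs \<inter> {a, w, c} = {}"
  shows "rot_step E (chT xs T1) (chT xs T2)" "rot_step E (chT xs T2) (chT xs T3)"
    "rot_step E (chT xs T3) (chT xs T4)" "rot_step E (chT xs T4) (chT xs T5)"
    "rot_step E (chT xs T5) (chT xs T1)"
proof -
  let ?B = "{a, w, c}"
  have gen: "\<And>T T' u v. (v, u) \<in> snd T \<Longrightarrow> snd T \<subseteq> ?B \<times> ?B \<Longrightarrow> fst T \<in> ?B \<Longrightarrow> fst T \<noteq> v
      \<Longrightarrow> u \<in> ?B \<Longrightarrow> v \<in> ?B \<Longrightarrow> rotate E T u v = T' \<Longrightarrow> rot_step E (chT xs T) (chT xs T')"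
  proof -
    fix T T' u v assume h: "(v, u) \<in> snd T" "snd T \<subseteq> ?B \<times> ?B" "fst T \<in> ?B" "fst T \<noteq> v"
      "u \<in> ?B" "v \<in> ?B" "rotate E T u v = T'"
    have "rotate E (chT xs T) u v = chT xs (rotate E T u v)"
      by (rule chT_rot[OF assms h(5) h(6) h(2) h(3) h(4)])
    moreover have "(v, u) \<in> snd (chT xs T)" using chT_mono h(1) by blast
    ultimately show "rot_step E (chT xs T) (chT xs T')" unfolding rot_step_def using h(7) by metis
  qed
  show "rot_step E (chT xs T1) (chT xs T2)" by (rule gen[OF _ _ _ _ _ _ r12]) (use d in \<open>auto simp: T1_def\<close>)
  show "rot_step E (chT xs T2) (chT xs T3)" by (rule gen[OF _ _ _ _ _ _ r23]) (use d in \<open>auto simp: T2_def\<close>)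
  show "rot_step E (chT xs T3) (chT xs T4)" by (rule gen[OF _ _ _ _ _ _ r34]) (use d in \<open>auto simp: T3_def\<close>)
  show "rot_step E (chT xs T4) (chT xs T5)" by (rule gen[OF _ _ _ _ _ _ r45]) (use d in \<open>auto simp: T4_def\<close>)
  show "rot_step E (chT xs T5) (chT xs T1)" by (rule gen[OF _ _ _ _ _ _ r51]) (use d in \<open>auto simp: T5_def\<close>)
qed

end

lemma lower:
  assumes th: "threshold V E" and cn: "connected_in E V" and nc: "\<not> complete_graph V E"
  shows "\<not> colorable (search_trees E V) (rot_adj E) 2"
proof
  assume col: "colorable (search_trees E V) (rot_adj E) 2"
  obtain idx U where thr: "thr_struct V E idx U" using threshold_struct[OF th] by blast
  obtain a c where ac: "a \<in> V" "c \<in> V" "a \<noteq> c" "{a, c} \<notin> E"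
    using nc unfolding complete_graph_def by blast
  have inj: "\<And>x y. x \<in> V \<Longrightarrow> y \<in> V \<Longrightarrow> idx x = idx y \<Longrightarrow> x = y"
    using thr_structD(2)[OF thr] unfolding inj_on_def by blast
  have adj: "\<And>x y. x \<in> V \<Longrightarrow> y \<in> V \<Longrightarrow> {x, y} \<in> E \<longleftrightarrow> (x \<noteq> y \<and> ((idx x < idx y \<and> U y) \<or> (idx y < idx x \<and> U x)))"
    using thr_structD(4)[OF thr] by blast
  have loops: "\<And>x. {x, x} \<notin> E"
  proof
    fix x assume "{x, x} \<in> E"
    then obtain p q where "p \<noteq> q" "{x, x} = {p, q}" using thr_structD(3)[OF thr] by blast
    then show False by (auto simp: doubleton_eq_iff)
  qed
  have "idx a \<noteq> idx c" using inj ac by blast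
  then have "\<exists>x y. x \<in> V \<and> y \<in> V \<and> idx x < idx y" using ac by (metis linorder_neqE_nat)
  then obtain x y where xy: "x \<in> V" "y \<in> V" "idx x < idx y" by blast
  obtain w where w: "w \<in> V" "U w" "\<forall>d'\<in>V. idx d' \<le> idx w"
    using thr_max_g[OF thr cn subset_refl xy] by blast
  have univ: "\<And>z. z \<in> V \<Longrightarrow> z \<noteq> w \<Longrightarrow> {z, w} \<in> E"
  proof -
    fix z assume z: "z \<in> V" "z \<noteq> w"
    have "idx z \<le> idx w" using w(3) z(1) by blast
    moreover have "idx z \<noteq> idx w" using inj z w(1) by blast
    ultimately have "idx z < idx w" by simp
    then show "{z, w} \<in> E" using adj[OF z(1) w(1)] z(2) w(2) by simp
  qed
  have wa: "a \<noteq> w"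
  proof
    assume "a = w"
    then have "{c, a} \<in> E" using univ ac by simp
    then show False using ac(4) by (simp add: insert_commute)
  qed
  have wc: "w \<noteq> c"
  proof
    assume "w = c"
    then have "{a, c} \<in> E" using univ ac by simp
    then show False using ac(4) by simp
  qed
  interpret P: p3 E a w c
  proof
    show "a \<noteq> w" "w \<noteq> c" "a \<noteq> c" using wa wc ac by auto
    show "{a, w} \<in> E" using univ ac wa by simp
    show "{c, w} \<in> E" using univ ac wc by simp
    show "{a, c} \<notin> E" by (rule ac(4))
    show "\<And>x. {x, x} \<notin> E" by (rule loops)
  qed
  let ?B = "{a, w, c}"
  have finV: "finite V" using thr_structD(1)[OF thr] .
  obtain xs where xs: "set xs = V - ?B" "distinct xs"
    using finite_distinct_list[of "V - ?B"] finV by blast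
  have BV: "?B \<subseteq> V" using ac w(1) by blast
  have Veq: "set xs \<union> ?B = V" using xs BV by blast
  have dj: "set xs \<inter> ?B = {}" using xs by blast
  have conn: "\<And>S. S \<subseteq> set xs \<Longrightarrow> connected_in E (S \<union> ?B)"
  proof -
    fix S assume S: "S \<subseteq> set xs"
    show "connected_in E (S \<union> ?B)"
    proof (rule conn_hub[where w = w])
      show "w \<in> S \<union> ?B" by simp
      fix z assume "z \<in> S \<union> ?B" "z \<noteq> w"
      then show "{z, w} \<in> E" using univ S xs BV by blast
    qed
  qed
  have inW: "\<And>T. search_tree E ?B (fst T) (snd T) \<Longrightarrow> chT xs T \<in> search_trees E V"
  proof -
    fix T assume T: "search_tree E ?B (fst T) (snd T)"
    have "search_tree E (set xs \<union> ?B) (fst (chT xs T)) (snd (chT xs T))"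
      apply (rule chT_tree)
         apply (rule xs(2))
        apply (rule dj)
       apply (erule conn)
      apply (rule T)
      done
    then show "chT xs T \<in> search_trees E V" unfolding search_trees_def Veq
      by (cases "chT xs T") simp
  qed
  obtain f :: "'a rtree \<Rightarrow> nat" where ff: "f ` search_trees E V \<subseteq> {..<2} \<and>
    (\<forall>x\<in>search_trees E V. \<forall>y\<in>search_trees E V. rot_adj E x y \<longrightarrow> f x \<noteq> f y)"
    using col unfolding colorable_def by blast
  have f1: "f ` search_trees E V \<subseteq> {..<2}" using ff by (rule conjunct1)
  have f2: "\<And>x y. x \<in> search_trees E V \<Longrightarrow> y \<in> search_trees E V \<Longrightarrow> rot_adj E x y \<Longrightarrow> f x \<noteq> f y"
    using ff by simp
  have W: "chT xs P.T1 \<in> search_trees E V" "chT xs P.T2 \<in> search_trees E V" "chT xs P.T3 \<in> search_trees E V"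
    "chT xs P.T4 \<in> search_trees E V" "chT xs P.T5 \<in> search_trees E V"
    using inW P.st1 P.st2 P.st3 P.st4 P.st5 by blast+
  note S = P.chain_steps[OF xs(2) dj]
  have ne: "f (chT xs P.T1) \<noteq> f (chT xs P.T2)" "f (chT xs P.T2) \<noteq> f (chT xs P.T3)"
    "f (chT xs P.T3) \<noteq> f (chT xs P.T4)" "f (chT xs P.T4) \<noteq> f (chT xs P.T5)"
    "f (chT xs P.T5) \<noteq> f (chT xs P.T1)"
    using f2[OF W(1) W(2)] f2[OF W(2) W(3)] f2[OF W(3) W(4)] f2[OF W(4) W(5)] f2[OF W(5) W(1)] S
    unfolding rot_adj_def by simp_all
  have lt: "f (chT xs P.T1) < 2" "f (chT xs P.T2) < 2" "f (chT xs P.T3) < 2"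
    "f (chT xs P.T4) < 2" "f (chT xs P.T5) < 2"
    using f1 W by auto
  show False using ne lt by linarith
qed

theorem corollary3p5:
  fixes V :: "'a set" and E :: "'a set set"
  assumes "threshold V E"
    and "connected_in E V"
    and "\<not> complete_graph V E"
  shows "chromatic_number (search_trees E V) (rot_adj E) = 3"
  unfolding chromatic_number_def
proof (rule Least_equality)
  show "colorable (search_trees E V) (rot_adj E) 3" by (rule upper[OF assms(1)])
next
  fix k assume k: "colorable (search_trees E V) (rot_adj E) k"
  show "3 \<le> k"
  proof (rule ccontr)
    assume "\<not> 3 \<le> k"
    then have "k \<le> 2" by simp
    then have "colorable (search_trees E V) (rot_adj E) 2"
      using k unfolding colorable_def by (meson lessThan_subset_iff order_trans)
    then show False using lower[OF assms] by simp
  qed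
qed

end
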